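(* Let $f,g,h$ be nonnegative continuous functions on $[0,1]$, differentiable on $(0,1)$, positive on $(0,1]$, with $F=\log f$, $G=\log g$, $H=\log h$ such that $F'(x)\neq 0$ on $(0,1)$ and $F(x)\neq F(y)$ for $x\neq y$. Assume one of the following: (I) $(f,g)$ and $(f,h)$ are both CLI monotone pairs and $$1+\frac{G(y)-G(x)}{F(y)-F(x)}\le \frac{H(y)-H(x)}{F(y)-F(x)}\quad\text{for all } x<y;$$ (II) $(f,g)$ is a CLI monotone pair, $(f,h)$ is a CLI anti-monotone pair, and $$1+\frac{G(y)-G(x)}{F(y)-F(x)}+\frac{H(y)-H(x)}{F(y)-F(x)}\ge 0\quad\text{for all } x<y.$$ Then for every $\rho\in M_{n,+,1}(\mathbb{C})$ and all $A,B\in M_{n,sa}(\mathbb{C})$, $$U_{\rho,(f,g,h)}(A)\,U_{\rho,(f,g,h)}(B)\ \ge\ \beta(f,g,h)\,\big|\mathrm{Tr}[f(\rho)g(\rho)h(\rho)[A,B]]\big|^2 .$$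
   Context: $M_{n,sa}(\mathbb{C})$ denotes the $n\times n$ self-adjoint complex matrices and $M_{n,+,1}(\mathbb{C})=\{\rho\in M_n(\mathbb{C}):\rho>0,\ \mathrm{Tr}\rho=1\}$ the strictly positive density matrices; $f(\rho)$ etc. denote functional calculus. $[X,Y]=XY-YX$, $\{X,Y\}=XY+YX$. For $H\in M_{n,sa}(\mathbb{C})$ put $H_0=H-\mathrm{Tr}[\rho H]I$, and define $I_{\rho,(f,g,h)}(H)=\tfrac12\mathrm{Tr}[(i[f(\rho),H_0])(i[g(\rho),H_0])h(\rho)]$, $J_{\rho,(f,g,h)}(H)=\tfrac12\mathrm{Tr}[\{f(\rho),H_0\}\{g(\rho),H_0\}h(\rho)]$, $U_{\rho,(f,g,h)}(H)=\sqrt{I_{\rho,(f,g,h)}(H)J_{\rho,(f,g,h)}(H)}$. A pair $(f,g)$ of nonnegative continuous functions on $[0,1]$, differentiable on $(0,1)$, with $F=\log f$, $G=\log g$, is a CLI monotone pair if (a) $(f(x)-f(y))(g(x)-g(y))\ge 0$ for all $x,y\in[0,1]$ and (b) $0\le \inf_{0<x<1}G'(x)/F'(x)\le\sup_{0<x<1}G'(x)/F'(x)<\infty$; it is a CLI anti-monotone pair if (a) $(f(x)-f(y))(g(x)-g(y))\le 0$ for all $x,y$ and (b) $-\infty<\inf_{0<x<1}G'(x)/F'(x)\le\sup_{0<x<1}G'(x)/F'(x)\le 0$. With $m=\inf_{0<x<1}G'/F'$, $M=\sup_{0<x<1}G'/F'$, $n=\inf_{0<x<1}H'/F'$, $N=\sup_{0<x<1}H'/F'$,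 define $$\beta(f,g,h)=\min\Big\{\frac{m}{(1+m+n)^2},\frac{m}{(1+m+N)^2},\frac{M}{(1+M+n)^2},\frac{M}{(1+M+N)^2}\Big\}.$$ *)

theory Defs
  imports "HOL-Analysis.Analysis"
begin

definition cmat_trace :: "complex^'n^'n \<Rightarrow> complex" where
  "cmat_trace A = (\<Sum>i\<in>UNIV. A $ i $ i)"

definition cmat_adjoint :: "complex^'n^'n \<Rightarrow> complex^'n^'n" where
  "cmat_adjoint A = (\<chi> i j. cnj (A $ j $ i))"

definition cmat_hermitian :: "complex^'n^'n \<Rightarrow> bool" where
  "cmat_hermitian A \<longleftrightarrow> cmat_adjoint A = A"

definition cmat_unitary :: "complex^'n^'n \<Rightarrow> bool" where
  "cmat_unitary U \<longleftrightarrow> cmat_adjoint U ** U = mat 1 \<and> U ** cmat_adjoint U = mat 1"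

definition cmat_diag :: "('n \<Rightarrow> complex) \<Rightarrow> complex^'n^'n" where
  "cmat_diag d = (\<chi> i j. if i = j then d i else 0)"

definition cmat_posdef :: "complex^'n^'n \<Rightarrow> bool" where
  "cmat_posdef A \<longleftrightarrow> cmat_hermitian A \<and>
     (\<forall>v::complex^'n. v \<noteq> 0 \<longrightarrow> 0 < Re (\<Sum>i\<in>UNIV. cnj (v $ i) * (A *v v) $ i))"

definition density_pos :: "complex^'n^'n \<Rightarrow> bool" where
  "density_pos \<rho> \<longleftrightarrow> cmat_posdef \<rho> \<and> cmat_trace \<rho> = 1"

text \<open>Functional calculus for Hermitian matrices: if A = U diag(d) U^* with U unitary and
  d real, then f(A) = U diag(f(d)) U^* (independent of the chosen decomposition).\<close>
definition mat_fun :: "(real \<Rightarrow> real) \<Rightarrow> complex^'n^'n \<Rightarrow> complex^'n^'n" where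
  "mat_fun f A = (SOME B. \<exists>U d. cmat_unitary U \<and> (\<forall>i. d i \<in> \<real>) \<and>
      A = U ** cmat_diag d ** cmat_adjoint U \<and>
      B = U ** cmat_diag (\<lambda>i. complex_of_real (f (Re (d i)))) ** cmat_adjoint U)"

definition commutator :: "complex^'n^'n \<Rightarrow> complex^'n^'n \<Rightarrow> complex^'n^'n" where
  "commutator X Y = X ** Y - Y ** X"

definition anticommutator :: "complex^'n^'n \<Rightarrow> complex^'n^'n \<Rightarrow> complex^'n^'n" where
  "anticommutator X Y = X ** Y + Y ** X"

definition centered :: "complex^'n^'n \<Rightarrow> complex^'n^'n \<Rightarrow> complex^'n^'n" where
  "centered \<rho> H = H - mat (cmat_trace (\<rho> ** H))"

text \<open>The traces defining I and J are real for Hermitian H and rho; we take the real part.\<close>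
definition I_corr :: "complex^'n^'n \<Rightarrow> (real \<Rightarrow> real) \<Rightarrow> (real \<Rightarrow> real) \<Rightarrow> (real \<Rightarrow> real)
    \<Rightarrow> complex^'n^'n \<Rightarrow> real" where
  "I_corr \<rho> f g h H = (let H0 = centered \<rho> H in
     Re (cmat_trace ((mat \<i> ** commutator (mat_fun f \<rho>) H0) ** (mat \<i> ** commutator (mat_fun g \<rho>) H0)
        ** mat_fun h \<rho>)) / 2)"

definition J_corr :: "complex^'n^'n \<Rightarrow> (real \<Rightarrow> real) \<Rightarrow> (real \<Rightarrow> real) \<Rightarrow> (real \<Rightarrow> real)
    \<Rightarrow> complex^'n^'n \<Rightarrow> real" where
  "J_corr \<rho> f g h H = (let H0 = centered \<rho> H in
     Re (cmat_trace (anticommutator (mat_fun f \<rho>) H0 ** anticommutator (mat_fun g \<rho>) H0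
        ** mat_fun h \<rho>)) / 2)"

definition U_corr :: "complex^'n^'n \<Rightarrow> (real \<Rightarrow> real) \<Rightarrow> (real \<Rightarrow> real) \<Rightarrow> (real \<Rightarrow> real)
    \<Rightarrow> complex^'n^'n \<Rightarrow> real" where
  "U_corr \<rho> f g h H = sqrt (I_corr \<rho> f g h H * J_corr \<rho> f g h H)"

definition log_deriv_ratio :: "(real \<Rightarrow> real) \<Rightarrow> (real \<Rightarrow> real) \<Rightarrow> real \<Rightarrow> real" where
  "log_deriv_ratio f g x = deriv (\<lambda>t. ln (g t)) x / deriv (\<lambda>t. ln (f t)) x"

definition cli_monotone_pair :: "(real \<Rightarrow> real) \<Rightarrow> (real \<Rightarrow> real) \<Rightarrow> bool" where
  "cli_monotone_pair f g \<longleftrightarrow>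
     (\<forall>x\<in>{0..1}. \<forall>y\<in>{0..1}. (f x - f y) * (g x - g y) \<ge> 0) \<and>
     bdd_below (log_deriv_ratio f g ` {0<..<1}) \<and> bdd_above (log_deriv_ratio f g ` {0<..<1}) \<and>
     0 \<le> Inf (log_deriv_ratio f g ` {0<..<1})"

definition cli_antimonotone_pair :: "(real \<Rightarrow> real) \<Rightarrow> (real \<Rightarrow> real) \<Rightarrow> bool" where
  "cli_antimonotone_pair f g \<longleftrightarrow>
     (\<forall>x\<in>{0..1}. \<forall>y\<in>{0..1}. (f x - f y) * (g x - g y) \<le> 0) \<and>
     bdd_below (log_deriv_ratio f g ` {0<..<1}) \<and> bdd_above (log_deriv_ratio f g ` {0<..<1}) \<and>
     Sup (log_deriv_ratio f g ` {0<..<1}) \<le> 0"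

definition beta_const :: "(real \<Rightarrow> real) \<Rightarrow> (real \<Rightarrow> real) \<Rightarrow> (real \<Rightarrow> real) \<Rightarrow> real" where
  "beta_const f g h = (let
      m = Inf (log_deriv_ratio f g ` {0<..<1}); M = Sup (log_deriv_ratio f g ` {0<..<1});
      n = Inf (log_deriv_ratio f h ` {0<..<1}); N = Sup (log_deriv_ratio f h ` {0<..<1})
    in Min {m / (1 + m + n)^2, m / (1 + m + N)^2, M / (1 + M + n)^2, M / (1 + M + N)^2})"

end

theory Submission
  imports Defs "HOL-Analysis.Analysis"
begin

lemma tcosh_ge_sinh: "0 \<le> t \<Longrightarrow> sinh t \<le> t * cosh (t::real)"
proof -
  assume t: "0 \<le> t"
  have "(\<lambda>s. s * cosh s - sinh s) 0 \<le> (\<lambda>s. s * cosh s - sinh s) t"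
  proof (rule DERIV_nonneg_imp_nondecreasing[OF t])
    fix x :: real assume "0 \<le> x" "x \<le> t"
    show "\<exists>y. ((\<lambda>s. s * cosh s - sinh s) has_real_derivative y) (at x) \<and> 0 \<le> y"
      by (rule exI[of _ "x * sinh x"]) (auto intro!: derivative_eq_intros simp: \<open>0 \<le> x\<close>)
  qed
  thus ?thesis by simp
qed

lemma sinh_ratio_mono:
  fixes u v :: real
  assumes "0 \<le> v" "v \<le> u"
  shows "u * sinh v \<le> v * sinh u"
proof (cases "v = 0")
  case True thus ?thesis by simp
next
  case False
  hence v: "0 < v" using assms by simp
  have "(\<lambda>s. sinh s / s) v \<le> (\<lambda>s. sinh s / s) u"
  proof (rule DERIV_nonneg_imp_nondecreasing[OF assms(2)])
    fix x :: real assume x: "v \<le> x" "x \<le> u"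
    hence x0: "0 < x" using v by simp
    have "((\<lambda>s. sinh s / s) has_real_derivative (cosh x * x - sinh x * 1) / (x * x)) (at x)"
      by (rule derivative_eq_intros refl | use x0 in simp)+
    moreover have "0 \<le> (cosh x * x - sinh x * 1) / (x * x)"
      using tcosh_ge_sinh[of x] x0 by (simp add: algebra_simps)
    ultimately show "\<exists>y. ((\<lambda>s. sinh s / s) has_real_derivative y) (at x) \<and> 0 \<le> y" by blast
  qed
  hence "sinh v / v \<le> sinh u / u" by simp
  moreover have "0 < u" using v assms by simp
  ultimately show ?thesis using v by (simp add: field_simps)
qed

lemma hyp_main:
  fixes a b c :: real
  assumes a: "0 < a" and b: "0 \<le> b" and cs: "a + b \<le> c \<or> (c \<le> 0 \<and> 0 \<le> a + b + c)"
  shows "4 * a * b * (sinh (a + b + c))^2 \<le> sinh (2*a) * sinh (2*b) * (cosh c)^2 * (a + b + c)^2"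
proof -
  define d where "d = a + b"
  have d: "0 < d" using a b d_def by simp
  have lc: "4 * a * b * (sinh d)^2 \<le> sinh (2*a) * sinh (2*b) * d^2"
  proof -
    define w where "w = \<bar>a - b\<bar>"
    have w: "0 \<le> w" "w \<le> d" using a b by (auto simp: w_def d_def)
    have m: "d * sinh w \<le> w * sinh d" by (rule sinh_ratio_mono[OF w])
    have sw: "0 \<le> sinh w" using w by simp
    have "(d * sinh w)^2 \<le> (w * sinh d)^2"
      using m sw d by (intro power_mono) auto
    hence m2: "d^2 * (sinh w)^2 \<le> w^2 * (sinh d)^2" by (simp add: power_mult_distrib)
    have e1: "sinh (2*a) * sinh (2*b) = (cosh (2*d) - cosh (2*w)) / 2"
    proof -
      have "cosh (2*w) = cosh (2*(a-b))" by (simp add: w_def abs_if)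
      thus ?thesis unfolding d_def
        by (simp add: cosh_add cosh_diff algebra_simps)
    qed
    have e2: "cosh (2*d) = 1 + 2 * (sinh d)^2" by (simp add: cosh_double cosh_square_eq)
    have e3: "cosh (2*w) = 1 + 2 * (sinh w)^2" by (simp add: cosh_double cosh_square_eq)
    have e4: "4 * a * b = d^2 - w^2" by (simp add: d_def w_def power2_eq_square abs_if algebra_simps)
    show ?thesis unfolding e1 e2 e3 e4 using m2 by (simp add: algebra_simps)
  qed
  from cs show ?thesis
  proof
    assume c: "a + b \<le> c"
    hence c0: "0 < c" using d d_def by simp
    have k: "(c + d) * sinh (c - d) \<le> (c - d) * sinh (c + d)"
      using sinh_ratio_mono[of "c - d" "c + d"] c d d_def by simp
    have k1: "d * (cosh d * sinh c) \<le> c * (cosh c * sinh d)"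
      using k unfolding sinh_diff sinh_add by (simp add: algebra_simps)
    have k2: "d * sinh (d + c) \<le> (d + c) * sinh d * cosh c"
      using k1 unfolding sinh_add by (simp add: algebra_simps)
    have pos: "0 \<le> d * sinh (d + c)" using d c0 by simp
    have "(d * sinh (d + c))^2 \<le> ((d + c) * sinh d * cosh c)^2"
      using k2 pos by (intro power_mono) auto
    hence k3: "d^2 * (sinh (d+c))^2 \<le> (d+c)^2 * (sinh d)^2 * (cosh c)^2"
      by (simp add: power_mult_distrib)
    have ab: "0 \<le> 4 * a * b" using a b by simp
    have "d^2 * (4 * a * b * (sinh (d+c))^2) \<le> 4 * a * b * ((d+c)^2 * (sinh d)^2 * (cosh c)^2)"
      using mult_left_mono[OF k3 ab] by (simp add: algebra_simps)
    also have "\<dots> = (4 * a * b * (sinh d)^2) * ((d+c)^2 * (cosh c)^2)" by (simp add: algebra_simps)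
    also have "\<dots> \<le> (sinh (2*a) * sinh (2*b) * d^2) * ((d+c)^2 * (cosh c)^2)"
      by (rule mult_right_mono[OF lc]) simp
    finally have "d^2 * (4 * a * b * (sinh (d+c))^2) \<le> d^2 * (sinh (2*a) * sinh (2*b) * (cosh c)^2 * (d + c)^2)"
      by (simp add: algebra_simps)
    hence "4 * a * b * (sinh (d+c))^2 \<le> sinh (2*a) * sinh (2*b) * (cosh c)^2 * (d + c)^2"
      using d by (simp add: mult_le_cancel_left)
    thus ?thesis by (simp add: d_def)
  next
    assume c: "c \<le> 0 \<and> 0 \<le> a + b + c"
    have k: "d * sinh (d + c) \<le> (d + c) * sinh d"
      using sinh_ratio_mono[of "d + c" d] c d_def by simp
    have pos: "0 \<le> d * sinh (d + c)" using d c d_def by simp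
    have "(d * sinh (d + c))^2 \<le> ((d + c) * sinh d)^2"
      using k pos by (intro power_mono) auto
    hence k3: "d^2 * (sinh (d+c))^2 \<le> (d+c)^2 * (sinh d)^2"
      by (simp add: power_mult_distrib)
    have ab: "0 \<le> 4 * a * b" using a b by simp
    have ch: "1 \<le> (cosh c)^2" by (simp add: cosh_square_eq)
    have s2: "0 \<le> sinh (2*a) * sinh (2*b) * d^2" using a b by simp
    have "d^2 * (4 * a * b * (sinh (d+c))^2) \<le> 4 * a * b * ((d+c)^2 * (sinh d)^2)"
      using mult_left_mono[OF k3 ab] by (simp add: algebra_simps)
    also have "\<dots> = (4 * a * b * (sinh d)^2) * (d+c)^2" by (simp add: algebra_simps)
    also have "\<dots> \<le> (sinh (2*a) * sinh (2*b) * d^2) * (d+c)^2"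
      by (rule mult_right_mono[OF lc]) simp
    also have "\<dots> \<le> (sinh (2*a) * sinh (2*b) * d^2) * ((d+c)^2 * (cosh c)^2)"
      using ch s2 by (intro mult_left_mono) (auto intro: mult_le_cancel_left1[THEN iffD2] simp: mult_le_cancel_left1)
    finally have "d^2 * (4 * a * b * (sinh (d+c))^2) \<le> d^2 * (sinh (2*a) * sinh (2*b) * (cosh c)^2 * (d + c)^2)"
      by (simp add: algebra_simps)
    hence "4 * a * b * (sinh (d+c))^2 \<le> sinh (2*a) * sinh (2*b) * (cosh c)^2 * (d + c)^2"
      using d by (simp add: mult_le_cancel_left)
    thus ?thesis by (simp add: d_def)
  qed
qed

lemma ratio_cmp:
  fixes x y c :: real
  assumes "c + x \<noteq> 0" "c + y \<noteq> 0" "0 \<le> (x - y) * (c^2 - x*y)"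
  shows "y / (c + y)^2 \<le> x / (c + x)^2"
proof -
  have id: "x * (c + y)^2 - y * (c + x)^2 = (x - y) * (c^2 - x*y)"
    by (simp add: power2_eq_square algebra_simps)
  have "y * (c + x)^2 \<le> x * (c + y)^2" using id assms(3) by linarith
  thus ?thesis using assms(1,2) by (simp add: field_simps)
qed

lemma corner_step1:
  fixes m M x c :: real
  assumes m0: "0 \<le> m" and mx: "m \<le> x" and xM: "x \<le> M" and cx: "c + x \<noteq> 0"
  shows "\<exists>e\<in>{m, M}. c + e \<noteq> 0 \<and> e / (c + e)^2 \<le> x / (c + x)^2"
proof (cases "c^2 \<ge> x * m \<and> c + m \<noteq> 0")
  case True
  have "0 \<le> (x - m) * (c^2 - x*m)" using True mx by simp
  thus ?thesis using True ratio_cmp[of c x m] cx by auto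
next
  case False
  have x0: "0 \<le> x" using m0 mx by simp
  have xmM: "x * m \<le> x * M" using x0 mx xM by (intro mult_left_mono) auto
  have cM: "c^2 \<le> x * M"
  proof (cases "c + m = 0")
    case True
    hence "c^2 = m^2" by (simp add: power2_eq_square algebra_simps)
      (metis add.inverse_inverse add_eq_0_iff2 minus_mult_minus True)
    moreover have "m^2 \<le> x * m" using m0 mx by (simp add: power2_eq_square mult_right_mono)
    ultimately show ?thesis using xmM by simp
  next
    case False
    thus ?thesis using \<open>\<not> (c^2 \<ge> x * m \<and> c + m \<noteq> 0)\<close> xmM by simp
  qed
  have cM0: "c + M \<noteq> 0"
  proof
    assume h: "c + M = 0"
    hence "c^2 = M^2" by (metis add_eq_0_iff2 power2_minus)
    hence "M * M \<le> x * M" using cM by (simp add: power2_eq_square)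
    moreover have "0 \<le> M" using x0 xM by simp
    ultimately have "M \<le> x \<or> M = 0"
      by (metis mult_right_le_imp_le nless_le)
    hence "x = M" using xM x0 by auto
    thus False using h cx by simp
  qed
  have "0 \<le> (x - M) * (c^2 - x*M)" using cM xM by (intro mult_nonpos_nonpos) auto
  thus ?thesis using ratio_cmp[of c x M] cx cM0 by auto
qed

lemma corner_step2:
  fixes n N g e :: real
  assumes "n \<le> g" "g \<le> N" "0 \<le> e" "1 + e + g \<noteq> 0"
  shows "\<exists>e'\<in>{n, N}. 1 + e + e' \<noteq> 0 \<and> e / (1 + e + e')^2 \<le> e / (1 + e + g)^2"
proof -
  have "\<exists>e'\<in>{n, N}. (1 + e + g)^2 \<le> (1 + e + e')^2"
  proof (cases "0 \<le> 1 + e + g")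
    case True
    hence "(1 + e + g)^2 \<le> (1 + e + N)^2" using assms by (intro power_mono) auto
    thus ?thesis by auto
  next
    case False
    hence "(-(1 + e + g))^2 \<le> (-(1 + e + n))^2" using assms by (intro power_mono) auto
    hence "(1 + e + g)^2 \<le> (1 + e + n)^2" by (simp only: power2_minus)
    thus ?thesis by auto
  qed
  then obtain e' where e': "e' \<in> {n, N}" "(1 + e + g)^2 \<le> (1 + e + e')^2" by blast
  have p: "0 < (1 + e + g)^2" using assms(4) by simp
  hence "1 + e + e' \<noteq> 0" using e'(2) by auto
  moreover have "e / (1 + e + e')^2 \<le> e / (1 + e + g)^2"
    using e'(2) p assms(3) by (intro divide_left_mono) (auto intro!: mult_pos_pos)
  ultimately show ?thesis using e'(1) by blast
qed

lemma corner:
  fixes m M n N x g :: real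
  assumes "0 \<le> m" "m \<le> x" "x \<le> M" "n \<le> g" "g \<le> N"
  shows "Min {m / (1 + m + n)^2, m / (1 + m + N)^2, M / (1 + M + n)^2, M / (1 + M + N)^2}
           * (1 + x + g)^2 \<le> x"
proof (cases "1 + x + g = 0")
  case True thus ?thesis using assms by simp
next
  case False
  have x0: "0 \<le> x" using assms by simp
  have cx: "(1 + g) + x \<noteq> 0" using False by (simp add: algebra_simps)
  obtain e where e: "e \<in> {m, M}" "(1 + g) + e \<noteq> 0" "e / ((1 + g) + e)^2 \<le> x / ((1 + g) + x)^2"
    using corner_step1[OF assms(1-3) cx] by blast
  have e0: "0 \<le> e" using e(1) assms by auto
  have e2: "1 + e + g \<noteq> 0" using e(2) by (simp add: algebra_simps)
  obtain e' where e': "e' \<in> {n, N}" "e / (1 + e + e')^2 \<le> e / (1 + e + g)^2"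
    using corner_step2[OF assms(4,5) e0 e2] by blast
  have eq1: "(1 + g) + e = 1 + e + g" "(1 + g) + x = 1 + x + g" by simp_all
  note e3 = e(3)[unfolded eq1]
  let ?S = "{m / (1 + m + n)^2, m / (1 + m + N)^2, M / (1 + M + n)^2, M / (1 + M + N)^2}"
  have "e / (1 + e + e')^2 \<in> ?S" using e(1) e'(1) by auto
  hence "Min ?S \<le> e / (1 + e + e')^2" by (intro Min_le) auto
  also have "\<dots> \<le> x / (1 + x + g)^2" using e'(2) e3 by linarith
  finally have "Min ?S \<le> x / (1 + x + g)^2" .
  hence "Min ?S * (1 + x + g)^2 \<le> x / (1 + x + g)^2 * (1 + x + g)^2"
    by (intro mult_right_mono) auto
  thus ?thesis using False by simp
qed

lemma hyp_signed:
  fixes a b c :: real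
  assumes a: "a \<noteq> 0" and b: "0 \<le> b / a"
    and cs: "1 + b / a \<le> c / a \<or> (c / a \<le> 0 \<and> 0 \<le> 1 + b / a + c / a)"
  shows "4 * a * b * (sinh (a + b + c))^2 \<le> sinh (2*a) * sinh (2*b) * (cosh c)^2 * (a + b + c)^2"
proof (cases "0 < a")
  case True
  have b0: "0 \<le> b" using b True by (simp add: zero_le_divide_iff)
  have e: "1 + b/a = (a+b)/a" "(a+b)/a + c/a = (a+b+c)/a" using True by (simp_all add: field_simps)
  have "a + b \<le> c \<or> (c \<le> 0 \<and> 0 \<le> a + b + c)"
    using cs True unfolding e(1) e(2) by (auto simp: divide_le_cancel zero_le_divide_iff divide_le_0_iff)
  thus ?thesis using hyp_main[OF True b0] by blast
next
  case False
  hence a': "0 < -a" using a by simp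
  have b0: "0 \<le> -b" using b a' by (simp add: zero_le_divide_iff)
  have "(-a) + (-b) \<le> -c \<or> (-c \<le> 0 \<and> 0 \<le> (-a) + (-b) + (-c))"
  proof -
    have an: "a < 0" using a' by simp
    have e: "1 + b/a = (a+b)/a" "(a+b)/a + c/a = (a+b+c)/a" using an by (simp_all add: field_simps)
    show ?thesis
      using cs an unfolding e(1) e(2) by (auto simp: divide_le_cancel zero_le_divide_iff divide_le_0_iff)
  qed
  note hm = hyp_main[OF a' b0 this]
  have "4 * - a * - b * (sinh (- a + - b + - c))\<^sup>2
     \<le> sinh (2 * - a) * sinh (2 * - b) * (cosh (- c))\<^sup>2 * (- a + - b + - c)\<^sup>2" by (rule hm)
  moreover have "- a + - b + - c = -(a+b+c)" "2 * - a = -(2*a)" "2 * - b = -(2*b)" by simp_all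
  ultimately show ?thesis by (simp only: sinh_minus cosh_minus power2_minus)
qed

lemma scalar_ineq:
  fixes fx fy gx gy hx hy \<beta> :: real
  assumes pos: "0 < fx" "0 < fy" "0 < gx" "0 < gy" "0 < hx" "0 < hy"
    and P0: "ln fx - ln fy \<noteq> 0"
    and a0: "0 \<le> (ln gx - ln gy) / (ln fx - ln fy)"
    and cs: "1 + (ln gx - ln gy) / (ln fx - ln fy) \<le> (ln hx - ln hy) / (ln fx - ln fy)
        \<or> ((ln hx - ln hy) / (ln fx - ln fy) \<le> 0 \<and>
           0 \<le> 1 + (ln gx - ln gy) / (ln fx - ln fy) + (ln hx - ln hy) / (ln fx - ln fy))"
    and bt: "\<beta> * (1 + (ln gx - ln gy) / (ln fx - ln fy) + (ln hx - ln hy) / (ln fx - ln fy))^2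
          \<le> (ln gx - ln gy) / (ln fx - ln fy)"
  shows "16 * \<beta> * (fx * gx * hx - fy * gy * hy)^2
          \<le> (fx - fy) * (gx - gy) * (fx + fy) * (gx + gy) * (hx + hy)^2"
proof -
  define P where "P = ln fx - ln fy"
  define Q where "Q = ln gx - ln gy"
  define R where "R = ln hx - ln hy"
  define a where "a = P / 2"
  define b where "b = Q / 2"
  define c where "c = R / 2"
  have a: "a \<noteq> 0" using P0 by (simp add: a_def P_def)
  have ba: "b / a = Q / P" "c / a = R / P" using a by (auto simp: a_def b_def c_def)
  have H: "4 * a * b * (sinh (a + b + c))^2 \<le> sinh (2*a) * sinh (2*b) * (cosh c)^2 * (a + b + c)^2"
    by (rule hyp_signed[OF a]) (use a0 cs in \<open>simp_all add: ba P_def Q_def R_def\<close>)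
  have ab0: "0 \<le> a * b"
  proof -
    have "0 \<le> b / a" using a0 ba by (simp add: P_def Q_def)
    thus ?thesis by (auto simp: zero_le_divide_iff zero_le_mult_iff)
  qed
  have Pn: "P \<noteq> 0" using P0 by (simp add: P_def)
  have Bt: "\<beta> * (a + b + c)^2 \<le> a * b"
  proof -
    define S where "S = 1 + Q/P + R/P"
    have h1: "a + b + c = S * (P/2)" using Pn by (simp add: S_def a_def b_def c_def field_simps)
    have h2: "a * b = Q/P * (P/2)^2" using Pn by (simp add: a_def b_def field_simps power2_eq_square)
    have "\<beta> * S^2 * (P/2)^2 \<le> Q/P * (P/2)^2"
      using bt by (intro mult_right_mono) (simp_all add: S_def P_def Q_def R_def)
    thus ?thesis unfolding h1 h2 power_mult_distrib by (metis mult.assoc)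
  qed
  have sh_nonneg: "0 \<le> sinh (2*a) * sinh (2*b)"
  proof -
    have "0 \<le> a * b" by (rule ab0)
    thus ?thesis
      by (cases "0 \<le> a"; cases "0 \<le> b") (auto simp: mult_nonneg_nonneg mult_nonpos_nonpos zero_le_mult_iff)
  qed
  have K: "4 * \<beta> * (sinh (a + b + c))^2 \<le> sinh (2*a) * sinh (2*b) * (cosh c)^2"
  proof (cases "a + b + c = 0")
    case True thus ?thesis using sh_nonneg by simp
  next
    case False
    have "4 * \<beta> * (sinh (a + b + c))^2 * (a+b+c)^2 = 4 * (sinh (a + b + c))^2 * (\<beta> * (a+b+c)^2)"
      by simp
    also have "\<dots> \<le> 4 * (sinh (a + b + c))^2 * (a * b)" using Bt by (intro mult_left_mono) auto
    also have "\<dots> \<le> sinh (2*a) * sinh (2*b) * (cosh c)^2 * (a + b + c)^2" using H by (simp add: algebra_simps)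
    finally show ?thesis using False by simp
  qed
  define p where "p = fx / fy"
  define q where "q = gx / gy"
  define r where "r = hx / hy"
  define t where "t = p * q * r"
  have pp: "0 < p" "0 < q" "0 < r" "0 < t" using pos by (auto simp: p_def q_def r_def t_def)
  have lp: "ln p = P" "ln q = Q" "ln r = R" "ln t = P + Q + R"
    using pos by (auto simp: p_def q_def r_def t_def P_def Q_def R_def ln_div ln_mult)
  have s1: "sinh (2*a) = (p - inverse p) / 2" using sinh_ln_real[OF pp(1)] lp by (simp add: a_def)
  have s2: "sinh (2*b) = (q - inverse q) / 2" using sinh_ln_real[OF pp(2)] lp by (simp add: b_def)
  have s3: "(cosh c)^2 = ((r + inverse r) / 2 + 1) / 2"
  proof -
    have "cosh (2*c) = 2 * (cosh c)^2 - 1" by (simp add: cosh_double cosh_square_eq)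
    moreover have "cosh (2*c) = (r + inverse r) / 2" using cosh_ln_real[OF pp(3)] lp by (simp add: c_def)
    ultimately show ?thesis by (simp add: field_simps)
  qed
  have s4: "(sinh (a+b+c))^2 = ((t + inverse t) / 2 - 1) / 2"
  proof -
    have "cosh (2*(a+b+c)) = 2 * (sinh (a+b+c))^2 + 1"
      using cosh_double[of "a+b+c"] cosh_square_eq[of "a+b+c"] by (simp only:)
    moreover have "cosh (2*(a+b+c)) = (t + inverse t) / 2" using cosh_ln_real[OF pp(4)] lp
      by (simp add: a_def b_def c_def algebra_simps)
    ultimately show ?thesis by (simp add: field_simps)
  qed
  have K2: "2 * \<beta> * ((t + inverse t) / 2 - 1) \<le> (p - inverse p) / 2 * ((q - inverse q) / 2) * (((r + inverse r) / 2 + 1) / 2)"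
    using K unfolding s1 s2 s3 s4 by simp
  have e1: "(t + inverse t) / 2 - 1 = (t - 1)^2 / (2 * t)" using pp by (simp add: field_simps power2_eq_square)
  have e2: "(p - inverse p) / 2 * ((q - inverse q) / 2) * (((r + inverse r) / 2 + 1) / 2)
      = (p^2 - 1) * (q^2 - 1) * (r + 1)^2 / (16 * t)"
    using pp by (simp add: t_def field_simps power2_eq_square)
  have K3: "16 * \<beta> * (t - 1)^2 \<le> (p^2 - 1) * (q^2 - 1) * (r + 1)^2"
  proof -
    have "2 * \<beta> * ((t - 1)^2 / (2 * t)) \<le> (p^2 - 1) * (q^2 - 1) * (r + 1)^2 / (16 * t)"
      using K2 unfolding e1 e2 .
    hence "(2 * \<beta> * ((t - 1)^2 / (2 * t))) * (16 * t) \<le> ((p^2 - 1) * (q^2 - 1) * (r + 1)^2 / (16 * t)) * (16 * t)"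
      using pp by (intro mult_right_mono) auto
    moreover have "(2 * \<beta> * ((t - 1)^2 / (2 * t))) * (16 * t) = 16 * \<beta> * (t - 1)^2"
      using pp by (simp add: field_simps)
    moreover have "((p^2 - 1) * (q^2 - 1) * (r + 1)^2 / (16 * t)) * (16 * t) = (p^2 - 1) * (q^2 - 1) * (r + 1)^2"
      using pp by simp
    ultimately show ?thesis by simp
  qed
  have fx: "fx = p * fy" "gx = q * gy" "hx = r * hy" using pos by (auto simp: p_def q_def r_def)
  have L: "16 * \<beta> * (fx * gx * hx - fy * gy * hy)^2 = (fy * gy * hy)^2 * (16 * \<beta> * (t - 1)^2)"
    unfolding fx t_def by (simp add: power2_eq_square algebra_simps)
  have Rr: "(fx - fy) * (gx - gy) * (fx + fy) * (gx + gy) * (hx + hy)^2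
      = (fy * gy * hy)^2 * ((p^2 - 1) * (q^2 - 1) * (r + 1)^2)"
    unfolding fx by (simp add: power2_eq_square algebra_simps)
  show ?thesis unfolding L Rr by (rule mult_left_mono[OF K3]) simp
qed

lemma logd:
  assumes "g differentiable (at z)" "0 < g z"
  shows "((\<lambda>t. ln (g t)) has_real_derivative deriv (\<lambda>t. ln (g t)) z) (at z)"
proof -
  obtain D where D: "(g has_real_derivative D) (at z)"
    using assms(1) real_differentiable_def by blast
  have "((\<lambda>t. ln (g t)) has_real_derivative (1 / g z * D)) (at z)"
    by (rule DERIV_chain2[OF _ D, where f=ln]) (use assms(2) in \<open>auto intro!: derivative_eq_intros\<close>)
  thus ?thesis using DERIV_imp_deriv by metis
qed

lemma mvt_ratio:
  fixes f g :: "real \<Rightarrow> real"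
  assumes uv: "0 < u" "u < v" "v \<le> 1"
    and fc: "continuous_on {0..1} f" and gc: "continuous_on {0..1} g"
    and fd: "\<forall>x\<in>{0<..<1}. f differentiable (at x)" and gd: "\<forall>x\<in>{0<..<1}. g differentiable (at x)"
    and fp: "\<forall>x\<in>{0<..1}. 0 < f x" and gp: "\<forall>x\<in>{0<..1}. 0 < g x"
    and Fnz: "\<forall>x\<in>{0<..<1}. deriv (\<lambda>t. ln (f t)) x \<noteq> 0"
    and Fne: "ln (f v) - ln (f u) \<noteq> 0"
  shows "\<exists>z\<in>{0<..<1}. (ln (g v) - ln (g u)) / (ln (f v) - ln (f u)) = log_deriv_ratio f g z"
proof -
  define F where "F = (\<lambda>t. ln (f t))"
  define G where "G = (\<lambda>t. ln (g t))"
  define H where "H = (\<lambda>t. (F v - F u) * G t - (G v - G u) * F t)"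
  have sub: "{u..v} \<subseteq> {0..1}" using uv by auto
  have pos: "\<And>t. t \<in> {u..v} \<Longrightarrow> 0 < f t \<and> 0 < g t" using fp gp uv by auto
  have cF: "continuous_on {u..v} F" unfolding F_def
    by (rule continuous_on_ln[OF continuous_on_subset[OF fc sub]]) (use pos in force)
  have cG: "continuous_on {u..v} G" unfolding G_def
    by (rule continuous_on_ln[OF continuous_on_subset[OF gc sub]]) (use pos in force)
  have cH: "continuous_on {u..v} H" unfolding H_def by (intro continuous_intros cF cG)
  have dF: "\<And>z. u < z \<Longrightarrow> z < v \<Longrightarrow> (F has_real_derivative deriv F z) (at z)"
    unfolding F_def by (rule logd) (use fd fp uv in auto)
  have dG: "\<And>z. u < z \<Longrightarrow> z < v \<Longrightarrow> (G has_real_derivative deriv G z) (at z)"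
    unfolding G_def by (rule logd) (use gd gp uv in auto)
  have dH: "\<And>z. u < z \<Longrightarrow> z < v \<Longrightarrow>
      (H has_real_derivative (F v - F u) * deriv G z - (G v - G u) * deriv F z) (at z)"
    unfolding H_def by (auto intro!: derivative_eq_intros dF dG)
  obtain l z where lz: "u < z" "z < v" "DERIV H z :> l" "H v - H u = (v - u) * l"
    using MVT[OF uv(2) cH] dH real_differentiable_def by blast
  have "H v - H u = 0" unfolding H_def by (simp add: algebra_simps)
  hence l0: "l = 0" using lz(4) uv by simp
  have "l = (F v - F u) * deriv G z - (G v - G u) * deriv F z"
    using DERIV_unique[OF lz(3) dH[OF lz(1,2)]] .
  hence eq: "(F v - F u) * deriv G z = (G v - G u) * deriv F z" using l0 by simp
  have z01: "z \<in> {0<..<1}" using lz uv by auto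
  have Fz: "deriv F z \<noteq> 0" using Fnz z01 by (simp add: F_def)
  have "(G v - G u) / (F v - F u) = deriv G z / deriv F z"
    using eq Fz Fne by (simp add: F_def field_simps)
  thus ?thesis using z01 unfolding log_deriv_ratio_def F_def G_def by blast
qed

lemma ratio_swap: "(a - b) / (c - d) = (b - a) / (d - (c::real))"
  by (metis minus_diff_eq minus_divide_divide)

lemma pair_ineq:
  fixes f g h :: "real \<Rightarrow> real"
  assumes f_cont: "continuous_on {0..1} f" and g_cont: "continuous_on {0..1} g"
      and h_cont: "continuous_on {0..1} h"
    and f_diff: "\<forall>x\<in>{0<..<1}. f differentiable (at x)"
      and g_diff: "\<forall>x\<in>{0<..<1}. g differentiable (at x)"
      and h_diff: "\<forall>x\<in>{0<..<1}. h differentiable (at x)"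
    and f_pos: "\<forall>x\<in>{0<..1}. 0 < f x" and g_pos: "\<forall>x\<in>{0<..1}. 0 < g x"
      and h_pos: "\<forall>x\<in>{0<..1}. 0 < h x"
    and F_deriv_nz: "\<forall>x\<in>{0<..<1}. deriv (\<lambda>t. ln (f t)) x \<noteq> 0"
    and F_inj: "inj_on (\<lambda>t. ln (f t)) {0<..1}"
    and cases:
      "(cli_monotone_pair f g \<and> cli_monotone_pair f h \<and>
          (\<forall>x\<in>{0<..1}. \<forall>y\<in>{0<..1}. x < y \<longrightarrow>
             1 + (ln (g y) - ln (g x)) / (ln (f y) - ln (f x))
               \<le> (ln (h y) - ln (h x)) / (ln (f y) - ln (f x))))
       \<or> (cli_monotone_pair f g \<and> cli_antimonotone_pair f h \<and>
          (\<forall>x\<in>{0<..1}. \<forall>y\<in>{0<..1}. x < y \<longrightarrow>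
             1 + (ln (g y) - ln (g x)) / (ln (f y) - ln (f x))
               + (ln (h y) - ln (h x)) / (ln (f y) - ln (f x)) \<ge> 0))"
    and x: "x \<in> {0<..1}" and y: "y \<in> {0<..1}"
  shows "16 * beta_const f g h * (f x * g x * h x - f y * g y * h y)^2
           \<le> (f x - f y) * (g x - g y) * (f x + f y) * (g x + g y) * (h x + h y)^2"
proof (cases "x = y")
  case True thus ?thesis by simp
next
  case False
  define u where "u = min x y"
  define v where "v = max x y"
  have uv: "0 < u" "u < v" "v \<le> 1" using x y False by (auto simp: u_def v_def)
  have uvin: "u \<in> {0<..1}" "v \<in> {0<..1}" using x y by (auto simp: u_def v_def)
  have sw: "\<And>k :: real \<Rightarrow> real. (k x - k y) / (ln (f x) - ln (f y)) = (k v - k u) / (ln (f v) - ln (f u))"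
    using ratio_swap by (cases "x < y") (auto simp: u_def v_def)
  have Fxy: "ln (f x) - ln (f y) \<noteq> 0" using F_inj False x y by (auto dest: inj_onD)
  have Fuv: "ln (f v) - ln (f u) \<noteq> 0" using F_inj uv uvin by (auto dest: inj_onD)
  define \<alpha> where "\<alpha> = (ln (g x) - ln (g y)) / (ln (f x) - ln (f y))"
  define \<gamma> where "\<gamma> = (ln (h x) - ln (h y)) / (ln (f x) - ln (f y))"
  obtain z1 where z1: "z1 \<in> {0<..<1}" "\<alpha> = log_deriv_ratio f g z1"
    using mvt_ratio[OF uv f_cont g_cont f_diff g_diff f_pos g_pos F_deriv_nz Fuv]
      sw[of "\<lambda>t. ln (g t)"] unfolding \<alpha>_def by auto
  obtain z2 where z2: "z2 \<in> {0<..<1}" "\<gamma> = log_deriv_ratio f h z2"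
    using mvt_ratio[OF uv f_cont h_cont f_diff h_diff f_pos h_pos F_deriv_nz Fuv]
      sw[of "\<lambda>t. ln (h t)"] unfolding \<gamma>_def by auto
  define m where "m = Inf (log_deriv_ratio f g ` {0<..<1})"
  define M where "M = Sup (log_deriv_ratio f g ` {0<..<1})"
  define n where "n = Inf (log_deriv_ratio f h ` {0<..<1})"
  define N where "N = Sup (log_deriv_ratio f h ` {0<..<1})"
  have mg: "cli_monotone_pair f g" using cases by blast
  have bh: "bdd_below (log_deriv_ratio f h ` {0<..<1}) \<and> bdd_above (log_deriv_ratio f h ` {0<..<1})"
    using cases unfolding cli_monotone_pair_def cli_antimonotone_pair_def by (elim disjE conjE) simp_all
  have m0: "0 \<le> m" using mg unfolding cli_monotone_pair_def m_def by blast
  have am: "m \<le> \<alpha>" "\<alpha> \<le> M" unfolding m_def M_def z1(2)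
    using mg z1(1) unfolding cli_monotone_pair_def by (auto intro!: cInf_lower cSup_upper)
  have gn: "n \<le> \<gamma>" "\<gamma> \<le> N" unfolding n_def N_def z2(2)
    using bh z2(1) by (auto intro!: cInf_lower cSup_upper)
  have beta: "beta_const f g h * (1 + \<alpha> + \<gamma>)^2 \<le> \<alpha>"
    unfolding beta_const_def Let_def m_def[symmetric] M_def[symmetric] n_def[symmetric] N_def[symmetric]
    by (rule corner[OF m0 am gn])
  have a0: "0 \<le> \<alpha>" using m0 am by simp
  have cs: "1 + \<alpha> \<le> \<gamma> \<or> (\<gamma> \<le> 0 \<and> 0 \<le> 1 + \<alpha> + \<gamma>)"
    using cases
  proof
    assume c: "cli_monotone_pair f g \<and> cli_monotone_pair f h \<and>
          (\<forall>x\<in>{0<..1}. \<forall>y\<in>{0<..1}. x < y \<longrightarrow>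
             1 + (ln (g y) - ln (g x)) / (ln (f y) - ln (f x))
               \<le> (ln (h y) - ln (h x)) / (ln (f y) - ln (f x)))"
    hence "1 + (ln (g v) - ln (g u)) / (ln (f v) - ln (f u)) \<le> (ln (h v) - ln (h u)) / (ln (f v) - ln (f u))"
      using uv uvin by blast
    thus ?thesis unfolding \<alpha>_def \<gamma>_def using sw[of "\<lambda>t. ln (g t)"] sw[of "\<lambda>t. ln (h t)"] by simp
  next
    assume c: "cli_monotone_pair f g \<and> cli_antimonotone_pair f h \<and>
          (\<forall>x\<in>{0<..1}. \<forall>y\<in>{0<..1}. x < y \<longrightarrow>
             1 + (ln (g y) - ln (g x)) / (ln (f y) - ln (f x))
               + (ln (h y) - ln (h x)) / (ln (f y) - ln (f x)) \<ge> 0)"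
    hence "0 \<le> 1 + (ln (g v) - ln (g u)) / (ln (f v) - ln (f u)) + (ln (h v) - ln (h u)) / (ln (f v) - ln (f u))"
      using uv uvin by blast
    moreover have "N \<le> 0" using c unfolding cli_antimonotone_pair_def N_def by blast
    ultimately show ?thesis using gn unfolding \<alpha>_def \<gamma>_def using sw[of "\<lambda>t. ln (g t)"] sw[of "\<lambda>t. ln (h t)"] by auto
  qed
  show ?thesis
    by (rule scalar_ineq) (use x y f_pos g_pos h_pos Fxy a0 cs beta in \<open>auto simp: \<alpha>_def \<gamma>_def\<close>)
qed

definition cinner :: "complex^'n \<Rightarrow> complex^'n \<Rightarrow> complex" where
  "cinner x y = (\<Sum>i\<in>UNIV. cnj (x$i) * y$i)"

lemma cnj_mult_self: "cnj z * z = complex_of_real ((cmod z)^2)"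
  by (metis complex_norm_square mult.commute)

lemma scaleR_comp: "(c *\<^sub>R (y::complex^'n)) $ i = complex_of_real c * y $ i"
proof -
  have "(c *\<^sub>R y) $ i = c *\<^sub>R (y $ i)" by (rule vector_scaleR_component)
  also have "\<dots> = complex_of_real c * y $ i" by (rule scaleR_conv_of_real)
  finally show ?thesis .
qed

lemma herm_entry: "cmat_hermitian A \<Longrightarrow> A $ i $ j = cnj (A $ j $ i)"
  unfolding cmat_hermitian_def cmat_adjoint_def
  by (metis vec_lambda_beta)

lemma cinner_herm:
  assumes "cmat_hermitian A"
  shows "cinner x (A *v y) = cinner (A *v x) y"
proof -
  have "cinner x (A *v y) = (\<Sum>i\<in>UNIV. \<Sum>j\<in>UNIV. cnj (x$i) * A$i$j * y$j)"
    unfolding cinner_def matrix_vector_mult_def by (simp add: sum_distrib_left mult.assoc)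
  also have "\<dots> = (\<Sum>j\<in>UNIV. \<Sum>i\<in>UNIV. cnj (x$i) * A$i$j * y$j)" by (rule sum.swap)
  also have "\<dots> = (\<Sum>j\<in>UNIV. \<Sum>i\<in>UNIV. cnj (A$j$i * x$i) * y$j)"
  proof (intro sum.cong refl)
    fix j i
    have "A$i$j = cnj (A$j$i)" by (rule herm_entry[OF assms])
    thus "cnj (x$i) * A$i$j * y$j = cnj (A$j$i * x$i) * y$j" by simp
  qed
  also have "\<dots> = cinner (A *v x) y"
    unfolding cinner_def matrix_vector_mult_def by (simp add: sum_distrib_right)
  finally show ?thesis .
qed

lemma inner_cinner: "inner x y = Re (cinner x y)"
  unfolding inner_vec_def cinner_def inner_complex_def by (simp add: Re_sum)

lemma cinner_add_right: "cinner x (y + z) = cinner x y + cinner x z"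
  unfolding cinner_def by (simp add: distrib_left sum.distrib)
lemma cinner_diff_right: "cinner x (y - z) = cinner x y - cinner x z"
  unfolding cinner_def by (simp add: right_diff_distrib sum_subtractf)
lemma cinner_scale_right: "cinner x (c *s y) = c * cinner x y"
  unfolding cinner_def by (simp add: sum_distrib_left mult_ac)
lemma cinner_scaleR_right: "cinner x (c *\<^sub>R y) = of_real c * cinner x y"
  unfolding cinner_def by (simp add: sum_distrib_left mult_ac scaleR_comp del: vector_scaleR_component)
lemma cinner_scale_left: "cinner (c *s x) y = cnj c * cinner x y"
  unfolding cinner_def by (simp add: sum_distrib_left mult_ac)
lemma cinner_sum_right: "cinner x (sum f S) = (\<Sum>j\<in>S. cinner x (f j))"
  unfolding cinner_def by (simp add: sum_distrib_left sum_component, rule sum.swap)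
lemma cinner_cnj: "cnj (cinner x y) = cinner y x"
  unfolding cinner_def by (simp add: mult.commute)
lemma cinner_self: "cinner x x = of_real ((norm x)^2)"
proof -
  have "(norm x)^2 = (\<Sum>i\<in>UNIV. (norm (x$i))^2)"
    unfolding norm_vec_def L2_set_def by (simp add: sum_nonneg)
  thus ?thesis unfolding cinner_def by (simp add: cnj_mult_self)
qed

lemma mv_add: "A *v (x + y) = A *v x + A *v (y :: complex^'n)"
  unfolding matrix_vector_mult_def by (simp add: vec_eq_iff distrib_left sum.distrib)
lemma mv_scaleR: "A *v (c *\<^sub>R x) = c *\<^sub>R (A *v (x :: complex^'n))"
  unfolding matrix_vector_mult_def by (simp add: vec_eq_iff scaleR_comp sum_distrib_left mult_ac del: vector_scaleR_component)

lemma cinner_zero_right[simp]: "cinner x 0 = 0" unfolding cinner_def by simp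

lemma cinner_scaleR_left: "cinner (c *\<^sub>R x) y = of_real c * cinner x y"
  unfolding cinner_def by (simp add: sum_distrib_left mult_ac scaleR_comp del: vector_scaleR_component)

lemma inner_herm:
  assumes "cmat_hermitian A"
  shows "inner x (A *v y) = inner (A *v x) (y :: complex^'n)"
  unfolding inner_cinner cinner_herm[OF assms] ..

lemma span_not_univ:
  fixes e :: "'n::finite \<Rightarrow> complex^'n"
  assumes "S \<noteq> UNIV"
  shows "vec.span (e ` S) \<noteq> UNIV"
proof
  assume h: "vec.span (e ` S) = UNIV"
  have "vec.dim (UNIV :: (complex^'n) set) \<le> card (e ` S)"
    by (rule vec.dim_le_card) (use h in auto)
  also have "\<dots> \<le> card S" by (rule card_image_le) simp
  also have "\<dots> < CARD('n)" using assms by (intro psubset_card_mono) auto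
  finally show False by (simp add: card_cart_basis)
qed

lemma eig_step:
  fixes A :: "complex^'n^'n" and e :: "'n \<Rightarrow> complex^'n" and S :: "'n set"
  assumes herm: "cmat_hermitian A"
    and on: "\<forall>j\<in>S. \<forall>k\<in>S. cinner (e j) (e k) = (if j = k then 1 else 0)"
    and eig: "\<forall>j\<in>S. A *v e j = complex_of_real (lam j) *s e j"
    and S: "S \<noteq> UNIV"
  shows "\<exists>w \<mu>. cinner w w = 1 \<and> (\<forall>j\<in>S. cinner (e j) w = 0) \<and> A *v w = complex_of_real \<mu> *s w"
proof -
  define W where "W = {v. \<forall>j\<in>S. cinner (e j) v = 0}"
  have W_add: "\<And>v w. v \<in> W \<Longrightarrow> w \<in> W \<Longrightarrow> v + w \<in> W"
    unfolding W_def by (simp add: cinner_add_right)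
  have W_scaleR: "\<And>v c. v \<in> W \<Longrightarrow> c *\<^sub>R v \<in> W"
    unfolding W_def by (simp add: cinner_scaleR_right)
  have W_inv: "\<And>v. v \<in> W \<Longrightarrow> A *v v \<in> W"
  proof -
    fix v assume v: "v \<in> W"
    { fix j assume j: "j \<in> S"
      have "cinner (e j) (A *v v) = cinner (A *v e j) v" by (rule cinner_herm[OF herm])
      also have "\<dots> = cnj (complex_of_real (lam j)) * cinner (e j) v"
        using eig j by (simp add: cinner_scale_left)
      also have "\<dots> = 0" using v j unfolding W_def by simp
      finally have "cinner (e j) (A *v v) = 0" . }
    thus "A *v v \<in> W" unfolding W_def by blast
  qed
  obtain z where z: "z \<notin> vec.span (e ` S)" using span_not_univ[OF S] by blast
  have finS: "finite S" by simp
  define w0 where "w0 = z - (\<Sum>j\<in>S. cinner (e j) z *s e j)"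
  have w0W: "w0 \<in> W"
  proof -
    { fix k assume k: "k \<in> S"
      have "cinner (e k) w0 = cinner (e k) z - (\<Sum>j\<in>S. cinner (e j) z * cinner (e k) (e j))"
        unfolding w0_def by (simp add: cinner_diff_right cinner_sum_right cinner_scale_right)
      also have "(\<Sum>j\<in>S. cinner (e j) z * cinner (e k) (e j)) = (\<Sum>j\<in>S. if k = j then cinner (e j) z else 0)"
        using on k by (intro sum.cong refl) auto
      also have "\<dots> = cinner (e k) z" using k by simp
      finally have "cinner (e k) w0 = 0" by simp }
    thus ?thesis unfolding W_def by blast
  qed
  have w0nz: "w0 \<noteq> 0"
  proof
    assume "w0 = 0"
    hence "z = (\<Sum>j\<in>S. cinner (e j) z *s e j)" unfolding w0_def by simp
    moreover have "(\<Sum>j\<in>S. cinner (e j) z *s e j) \<in> vec.span (e ` S)"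
      by (intro vec.span_sum vec.span_scale vec.span_base) auto
    ultimately show False using z by simp
  qed
  define K where "K = W \<inter> sphere 0 1"
  have KW: "K \<subseteq> W" unfolding K_def by auto
  have Kne: "K \<noteq> {}"
  proof -
    have "(1 / norm w0) *\<^sub>R w0 \<in> K" unfolding K_def using W_scaleR[OF w0W] w0nz by auto
    thus ?thesis by blast
  qed
  have closedW: "closed W"
  proof -
    have "W = (\<Inter>j\<in>S. {v. cinner (e j) v = 0})" unfolding W_def by auto
    moreover have "\<And>j. closed {v. cinner (e j) v = 0}"
      unfolding cinner_def by (intro closed_Collect_eq continuous_intros)
    ultimately show ?thesis by auto
  qed
  have Kc: "compact K" unfolding K_def by (intro closed_Int_compact closedW compact_sphere)
  have contq: "continuous_on K (\<lambda>v. inner v (A *v v))" by (intro continuous_intros)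
  obtain x where x: "x \<in> K" and xmax: "\<And>y. y \<in> K \<Longrightarrow> inner y (A *v y) \<le> inner x (A *v x)"
    using continuous_attains_sup[OF Kc Kne contq] by blast
  define lm where "lm = inner x (A *v x)"
  have xW: "x \<in> W" and xn: "norm x = 1" using x unfolding K_def by auto
  have ray: "\<And>v. v \<in> W \<Longrightarrow> inner v (A *v v) \<le> lm * inner v v"
  proof -
    fix v assume v: "v \<in> W"
    show "inner v (A *v v) \<le> lm * inner v v"
    proof (cases "v = 0")
      case True thus ?thesis by (simp add: matrix_vector_mult_0_right)
    next
      case False
      define c where "c = 1 / norm v"
      have c0: "0 < c" using False by (simp add: c_def)
      have "c *\<^sub>R v \<in> K" unfolding K_def using W_scaleR[OF v] False by (auto simp: c_def)
      hence "inner (c *\<^sub>R v) (A *v (c *\<^sub>R v)) \<le> lm" using xmax unfolding lm_def by blast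
      hence "c^2 * inner v (A *v v) \<le> lm" by (simp add: mv_scaleR power2_eq_square)
      hence "c^2 * inner v (A *v v) * (norm v)^2 \<le> lm * (norm v)^2" by (simp add: mult_right_mono)
      moreover have c1: "c^2 * (norm v)^2 = 1" using False by (simp add: c_def power2_eq_square)
      moreover have "c^2 * inner v (A *v v) * (norm v)^2 = inner v (A *v v)"
        using c1 by (metis mult.assoc mult.commute mult_1_right)
      ultimately show ?thesis by (simp add: power2_norm_eq_inner[symmetric])
    qed
  qed
  define y where "y = A *v x - lm *\<^sub>R x"
  have yW: "y \<in> W" unfolding y_def using W_add[OF W_inv[OF xW] W_scaleR[OF xW, of "-lm"]] by simp
  define \<phi> where "\<phi> = (\<lambda>v. inner v (A *v v) - lm * inner v v)"
  have phi_le: "\<And>v. v \<in> W \<Longrightarrow> \<phi> v \<le> 0" using ray unfolding \<phi>_def by fastforce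
  have phix: "\<phi> x = 0" using xn unfolding \<phi>_def lm_def by (simp add: power2_norm_eq_inner[symmetric])
  have exp: "\<And>t. \<phi> (x + t *\<^sub>R y) = 2 * t * inner y y + t^2 * \<phi> y"
  proof -
    fix t
    have s: "inner x (A *v y) = inner y (A *v x)"
      using inner_herm[OF herm, of x y] by (simp add: inner_commute)
    have "\<phi> (x + t *\<^sub>R y) = \<phi> x + 2 * t * (inner y (A *v x) - lm * inner x y) + t^2 * \<phi> y"
      unfolding \<phi>_def using s
      by (simp add: mv_add mv_scaleR inner_add_left inner_add_right power2_eq_square inner_commute algebra_simps)
    also have "inner y (A *v x) - lm * inner x y = inner y y"
      unfolding y_def by (simp add: inner_diff_left inner_diff_right inner_commute algebra_simps)
    finally show "\<phi> (x + t *\<^sub>R y) = 2 * t * inner y y + t^2 * \<phi> y" using phix by simp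
  qed
  have y0: "y = 0"
  proof (rule ccontr)
    assume "y \<noteq> 0"
    hence s: "0 < inner y y" by simp
    define c where "c = \<phi> y"
    define t where "t = inner y y / (\<bar>c\<bar> + 1)"
    have t0: "0 < t" using s by (simp add: t_def)
    have "\<phi> (x + t *\<^sub>R y) \<le> 0" by (rule phi_le[OF W_add[OF xW W_scaleR[OF yW]]])
    hence le: "2 * t * inner y y + t^2 * c \<le> 0" using exp by (simp add: c_def)
    have "t * (\<bar>c\<bar> + 1) = inner y y" by (simp add: t_def)
    hence "t^2 * \<bar>c\<bar> \<le> t * inner y y" using t0 by (simp add: power2_eq_square algebra_simps)
    moreover have "- (t^2 * \<bar>c\<bar>) \<le> t^2 * c" by (simp add: abs_if)
    moreover have "0 < t * inner y y" using t0 s by simp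
    ultimately show False using le by linarith
  qed
  have "A *v x = complex_of_real lm *s x"
    using y0 unfolding y_def by (simp add: vec_eq_iff scaleR_comp del: vector_scaleR_component)
  moreover have "cinner x x = 1" using xn by (simp add: cinner_self)
  moreover have "\<forall>j\<in>S. cinner (e j) x = 0" using xW unfolding W_def by blast
  ultimately show ?thesis by blast
qed

lemma eig_family:
  fixes A :: "complex^'n^'n" and S :: "'n set"
  assumes herm: "cmat_hermitian A" and fin: "finite S"
  shows "\<exists>e lam. (\<forall>j\<in>S. \<forall>k\<in>S. cinner (e j) (e k) = (if j = k then 1 else 0)) \<and>
                 (\<forall>j\<in>S. A *v e j = complex_of_real (lam j) *s e j)"
  using fin
proof (induction S rule: finite_induct)
  case empty thus ?case by auto
next
  case (insert a S)
  then obtain e lam where on: "\<forall>j\<in>S. \<forall>k\<in>S. cinner (e j) (e k) = (if j = k then 1 else 0)"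
    and eig: "\<forall>j\<in>S. A *v e j = complex_of_real (lam j) *s e j" by blast
  have "S \<noteq> UNIV" using insert(2) by auto
  from eig_step[OF herm on eig this] obtain w \<mu> where
    w: "cinner w w = 1" "\<forall>j\<in>S. cinner (e j) w = 0" "A *v w = complex_of_real \<mu> *s w" by blast
  define e' where "e' = e(a := w)"
  define lam' where "lam' = lam(a := \<mu>)"
  have "\<forall>j\<in>insert a S. \<forall>k\<in>insert a S. cinner (e' j) (e' k) = (if j = k then 1 else 0)"
  proof (intro ballI)
    fix j k assume j: "j \<in> insert a S" and k: "k \<in> insert a S"
    show "cinner (e' j) (e' k) = (if j = k then 1 else 0)"
    proof (cases "j = a"; cases "k = a")
      assume "j = a" "k = a" thus ?thesis using w by (simp add: e'_def)
    next
      assume "j = a" "k \<noteq> a"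
      hence "k \<in> S" using k by simp
      hence "cinner w (e k) = 0" using w(2) cinner_cnj[of "e k" w] by (metis complex_cnj_zero)
      thus ?thesis using \<open>j = a\<close> \<open>k \<noteq> a\<close> by (simp add: e'_def)
    next
      assume "j \<noteq> a" "k = a"
      hence "j \<in> S" using j by simp
      thus ?thesis using w(2) \<open>j \<noteq> a\<close> \<open>k = a\<close> by (simp add: e'_def)
    next
      assume "j \<noteq> a" "k \<noteq> a"
      thus ?thesis using j k on by (simp add: e'_def)
    qed
  qed
  moreover have "\<forall>j\<in>insert a S. A *v e' j = complex_of_real (lam' j) *s e' j"
    using eig w(3) by (auto simp: e'_def lam'_def)
  ultimately show ?case by blast
qed

lemma spectral:
  fixes A :: "complex^'n^'n"
  assumes herm: "cmat_hermitian A"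
  shows "\<exists>U d. cmat_unitary U \<and> (\<forall>i. d i \<in> \<real>) \<and> A = U ** cmat_diag d ** cmat_adjoint U"
proof -
  have ex: "\<exists>(e::'n \<Rightarrow> complex^'n) lam. (\<forall>j\<in>UNIV. \<forall>k\<in>UNIV. cinner (e j) (e k) = (if j = k then 1 else 0)) \<and>
                 (\<forall>j\<in>UNIV. A *v e j = complex_of_real (lam j) *s e j)"
    by (rule eig_family[OF herm finite_class.finite_UNIV])
  obtain e :: "'n \<Rightarrow> complex^'n" and lam where on: "\<forall>j\<in>UNIV. \<forall>k\<in>UNIV. cinner (e j) (e k) = (if j = k then 1 else 0)"
    and eig: "\<forall>j\<in>UNIV. A *v e j = complex_of_real (lam j) *s e j"
    using ex by blast
  define U :: "complex^'n^'n" where "U = (\<chi> i j. e j $ i)"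
  define d where "d = (\<lambda>i. complex_of_real (lam i))"
  have UU: "cmat_adjoint U ** U = mat 1"
  proof -
    have "(cmat_adjoint U ** U) $ j $ k = cinner (e j) (e k)" for j k
      unfolding U_def cmat_adjoint_def cinner_def matrix_matrix_mult_def by simp
    thus ?thesis using on by (simp add: vec_eq_iff mat_def)
  qed
  hence UU': "U ** cmat_adjoint U = mat 1" using matrix_left_right_inverse by blast
  have AU: "A ** U = U ** cmat_diag d"
  proof -
    have "(A ** U) $ i $ j = (A *v e j) $ i" for i j
      unfolding U_def matrix_matrix_mult_def matrix_vector_mult_def by simp
    moreover have "(U ** cmat_diag d) $ i $ j = e j $ i * d j" for i j
    proof -
      have "(U ** cmat_diag d) $ i $ j = (\<Sum>k\<in>UNIV. e k $ i * (if k = j then d k else 0))"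
        unfolding U_def cmat_diag_def matrix_matrix_mult_def by simp
      also have "\<dots> = e j $ i * d j" by (simp add: if_distrib cong: if_cong)
      finally show ?thesis .
    qed
    ultimately show ?thesis using eig by (simp add: vec_eq_iff d_def mult.commute)
  qed
  have "A = A ** (U ** cmat_adjoint U)" using UU' by simp
  also have "\<dots> = U ** cmat_diag d ** cmat_adjoint U" by (simp add: matrix_mul_assoc AU)
  finally have "A = U ** cmat_diag d ** cmat_adjoint U" .
  moreover have "cmat_unitary U" using UU UU' by (simp add: cmat_unitary_def)
  moreover have "\<forall>i. d i \<in> \<real>" by (simp add: d_def)
  ultimately show ?thesis by blast
qed

lemma sym_sum:
  fixes a w :: "'n::finite \<Rightarrow> 'n \<Rightarrow> real" and h :: "'n \<Rightarrow> real"
  assumes "\<And>i j. a i j = a j i" "\<And>i j. w i j = w j i"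
  shows "(\<Sum>i\<in>UNIV. \<Sum>j\<in>UNIV. a i j * h i * w i j) = (\<Sum>i\<in>UNIV. \<Sum>j\<in>UNIV. a i j * (h i + h j) * w i j) / 2"
proof -
  have "(\<Sum>i\<in>UNIV. \<Sum>j\<in>UNIV. a i j * h j * w i j) = (\<Sum>j\<in>UNIV. \<Sum>i\<in>UNIV. a i j * h j * w i j)"
    by (rule sum.swap)
  also have "\<dots> = (\<Sum>i\<in>UNIV. \<Sum>j\<in>UNIV. a i j * h i * w i j)"
    by (intro sum.cong refl) (metis assms)
  finally have e: "(\<Sum>i\<in>UNIV. \<Sum>j\<in>UNIV. a i j * h j * w i j) = (\<Sum>i\<in>UNIV. \<Sum>j\<in>UNIV. a i j * h i * w i j)" .
  have "(\<Sum>i\<in>UNIV. \<Sum>j\<in>UNIV. a i j * (h i + h j) * w i j)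
      = (\<Sum>i\<in>UNIV. \<Sum>j\<in>UNIV. a i j * h i * w i j) + (\<Sum>i\<in>UNIV. \<Sum>j\<in>UNIV. a i j * h j * w i j)"
    by (simp add: sum.distrib algebra_simps)
  thus ?thesis using e by simp
qed

lemma dsum_pair: "(\<Sum>i\<in>(UNIV::'n::finite set). \<Sum>j\<in>(UNIV::'n set). F i j) = (\<Sum>p\<in>UNIV. F (fst p) (snd p))"
  unfolding UNIV_Times_UNIV[symmetric] sum.cartesian_product by (simp add: case_prod_beta)

lemma final_sum_ineq:
  fixes fr gr hr :: "'n::finite \<Rightarrow> real" and X Y :: "'n \<Rightarrow> 'n \<Rightarrow> complex" and \<beta> :: real
  assumes hX: "\<And>i j. X j i = cnj (X i j)" and hY: "\<And>i j. Y j i = cnj (Y i j)"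
    and mono: "\<And>i j. 0 \<le> (fr i - fr j) * (gr i - gr j)"
    and nn: "\<And>i. 0 \<le> fr i" "\<And>i. 0 \<le> gr i" "\<And>i. 0 \<le> hr i"
    and pw: "\<And>i j. 16 * \<beta> * (fr i * gr i * hr i - fr j * gr j * hr j)^2
        \<le> (fr i - fr j) * (gr i - gr j) * (fr i + fr j) * (gr i + gr j) * (hr i + hr j)^2"
  defines "IX \<equiv> (\<Sum>i\<in>UNIV. \<Sum>j\<in>UNIV. (fr i - fr j) * (gr i - gr j) * hr i * (cmod (X i j))^2) / 2"
    and "JX \<equiv> (\<Sum>i\<in>UNIV. \<Sum>j\<in>UNIV. (fr i + fr j) * (gr i + gr j) * hr i * (cmod (X i j))^2) / 2"
    and "IY \<equiv> (\<Sum>i\<in>UNIV. \<Sum>j\<in>UNIV. (fr i - fr j) * (gr i - gr j) * hr i * (cmod (Y i j))^2) / 2"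
    and "JY \<equiv> (\<Sum>i\<in>UNIV. \<Sum>j\<in>UNIV. (fr i + fr j) * (gr i + gr j) * hr i * (cmod (Y i j))^2) / 2"
    and "T \<equiv> (\<Sum>i\<in>UNIV. \<Sum>j\<in>UNIV. complex_of_real (fr i * gr i * hr i - fr j * gr j * hr j) * X i j * Y j i)"
  shows "\<beta> * (cmod T)^2 \<le> sqrt (IX * JX) * sqrt (IY * JY)"
proof -
  define k where "k i = fr i * gr i * hr i" for i
  define u where "u p = (fr (fst p) - fr (snd p)) * (gr (fst p) - gr (snd p)) * (hr (fst p) + hr (snd p)) / 4" for p
  define v where "v p = (fr (fst p) + fr (snd p)) * (gr (fst p) + gr (snd p)) * (hr (fst p) + hr (snd p)) / 4" for p
  define xa where "xa p = cmod (X (fst p) (snd p))" for p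
  define ya where "ya p = cmod (Y (fst p) (snd p))" for p
  have cX: "cmod (X j i) = cmod (X i j)" for i j using hX[of i j] by simp
  have cY: "cmod (Y j i) = cmod (Y i j)" for i j using hY[of i j] by simp
  have u0: "\<And>p. 0 \<le> u p" unfolding u_def
    by (rule divide_nonneg_nonneg, rule mult_nonneg_nonneg, rule mono) (simp_all add: nn)
  have v0: "\<And>p. 0 \<le> v p" unfolding v_def
    by (rule divide_nonneg_nonneg, rule mult_nonneg_nonneg, rule mult_nonneg_nonneg) (simp_all add: nn)
  have IXe: "IX = (\<Sum>p\<in>UNIV. u p * (xa p)^2)"
  proof -
    have "IX = (\<Sum>i\<in>UNIV. \<Sum>j\<in>UNIV. (fr i - fr j) * (gr i - gr j) * (hr i + hr j) * (cmod (X i j))^2) / 4"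
      unfolding IX_def by (subst sym_sum) (auto simp: cX algebra_simps)
    also have "\<dots> = (\<Sum>p\<in>UNIV. u p * (xa p)^2)"
      unfolding dsum_pair u_def xa_def by (simp add: sum_divide_distrib)
    finally show ?thesis .
  qed
  have JXe: "JX = (\<Sum>p\<in>UNIV. v p * (xa p)^2)"
  proof -
    have "JX = (\<Sum>i\<in>UNIV. \<Sum>j\<in>UNIV. (fr i + fr j) * (gr i + gr j) * (hr i + hr j) * (cmod (X i j))^2) / 4"
      unfolding JX_def by (subst sym_sum) (auto simp: cX algebra_simps)
    also have "\<dots> = (\<Sum>p\<in>UNIV. v p * (xa p)^2)"
      unfolding dsum_pair v_def xa_def by (simp add: sum_divide_distrib)
    finally show ?thesis .
  qed
  have IYe: "IY = (\<Sum>p\<in>UNIV. u p * (ya p)^2)"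
  proof -
    have "IY = (\<Sum>i\<in>UNIV. \<Sum>j\<in>UNIV. (fr i - fr j) * (gr i - gr j) * (hr i + hr j) * (cmod (Y i j))^2) / 4"
      unfolding IY_def by (subst sym_sum) (auto simp: cY algebra_simps)
    also have "\<dots> = (\<Sum>p\<in>UNIV. u p * (ya p)^2)"
      unfolding dsum_pair u_def ya_def by (simp add: sum_divide_distrib)
    finally show ?thesis .
  qed
  have JYe: "JY = (\<Sum>p\<in>UNIV. v p * (ya p)^2)"
  proof -
    have "JY = (\<Sum>i\<in>UNIV. \<Sum>j\<in>UNIV. (fr i + fr j) * (gr i + gr j) * (hr i + hr j) * (cmod (Y i j))^2) / 4"
      unfolding JY_def by (subst sym_sum) (auto simp: cY algebra_simps)
    also have "\<dots> = (\<Sum>p\<in>UNIV. v p * (ya p)^2)"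
      unfolding dsum_pair v_def ya_def by (simp add: sum_divide_distrib)
    finally show ?thesis .
  qed
  have IX0: "0 \<le> IX" "0 \<le> JX" "0 \<le> IY" "0 \<le> JY"
    unfolding IXe JXe IYe JYe using u0 v0 by (auto intro!: sum_nonneg)
  define Sb where "Sb = (\<Sum>p\<in>UNIV. \<bar>k (fst p) - k (snd p)\<bar> * xa p * ya p)"
  have TS: "cmod T \<le> Sb"
  proof -
    have "cmod T = cmod (\<Sum>p\<in>UNIV. complex_of_real (k (fst p) - k (snd p)) * X (fst p) (snd p) * Y (snd p) (fst p))"
      unfolding T_def k_def dsum_pair ..
    also have "\<dots> \<le> (\<Sum>p\<in>UNIV. cmod (complex_of_real (k (fst p) - k (snd p)) * X (fst p) (snd p) * Y (snd p) (fst p)))"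
      by (rule norm_sum)
    also have "\<dots> = Sb" unfolding Sb_def xa_def ya_def
      by (simp add: norm_mult cY of_real_diff[symmetric] del: of_real_diff)
    finally show ?thesis .
  qed
  show ?thesis
  proof (cases "\<beta> \<le> 0")
    case True
    hence "\<beta> * (cmod T)^2 \<le> 0" by (simp add: mult_nonpos_nonneg)
    also have "0 \<le> sqrt (IX * JX) * sqrt (IY * JY)" using IX0 by simp
    finally show ?thesis .
  next
    case False
    hence b0: "0 < \<beta>" by simp
    have pwp: "\<And>p. sqrt \<beta> * \<bar>k (fst p) - k (snd p)\<bar> \<le> sqrt (u p) * sqrt (v p)"
    proof -
      fix p
      have "16 * \<beta> * (k (fst p) - k (snd p))^2 \<le> 16 * (u p * v p)"
        using pw[of "fst p" "snd p"] unfolding k_def u_def v_def by (simp add: power2_eq_square algebra_simps)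
      hence "\<beta> * (k (fst p) - k (snd p))^2 \<le> u p * v p" by simp
      hence "sqrt (\<beta> * (k (fst p) - k (snd p))^2) \<le> sqrt (u p * v p)" by (rule real_sqrt_le_mono)
      thus "sqrt \<beta> * \<bar>k (fst p) - k (snd p)\<bar> \<le> sqrt (u p) * sqrt (v p)"
        by (simp add: real_sqrt_mult)
    qed
    have key: "\<beta> * Sb^2 \<le> (\<Sum>p\<in>UNIV. c p * (a p)^2) * (\<Sum>p\<in>UNIV. d p * (b p)^2)"
      if ab: "\<And>p. \<bar>k (fst p) - k (snd p)\<bar> * xa p * ya p = \<bar>k (fst p) - k (snd p)\<bar> * a p * b p"
        and cd: "\<And>p. sqrt \<beta> * \<bar>k (fst p) - k (snd p)\<bar> \<le> sqrt (c p) * sqrt (d p)"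
        and c0: "\<And>p. 0 \<le> c p" and d0: "\<And>p. 0 \<le> d p" and a0: "\<And>p. 0 \<le> a p" and b0': "\<And>p. 0 \<le> b p"
      for a b c d :: "'n \<times> 'n \<Rightarrow> real"
    proof -
      have "sqrt \<beta> * Sb = (\<Sum>p\<in>UNIV. sqrt \<beta> * (\<bar>k (fst p) - k (snd p)\<bar> * xa p * ya p))"
        unfolding Sb_def by (simp add: sum_distrib_left)
      also have "\<dots> = (\<Sum>p\<in>UNIV. sqrt \<beta> * \<bar>k (fst p) - k (snd p)\<bar> * a p * b p)"
        by (intro sum.cong refl) (metis ab mult.assoc)
      also have "\<dots> \<le> (\<Sum>p\<in>UNIV. (sqrt (c p) * a p) * (sqrt (d p) * b p))"
      proof (rule sum_mono)
        fix p
        have "sqrt \<beta> * \<bar>k (fst p) - k (snd p)\<bar> * (a p * b p) \<le> sqrt (c p) * sqrt (d p) * (a p * b p)"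
          by (rule mult_right_mono[OF cd]) (simp add: a0 b0')
        thus "sqrt \<beta> * \<bar>k (fst p) - k (snd p)\<bar> * a p * b p \<le> sqrt (c p) * a p * (sqrt (d p) * b p)"
          by (simp add: mult_ac)
      qed
      finally have s1: "sqrt \<beta> * Sb \<le> (\<Sum>p\<in>UNIV. (sqrt (c p) * a p) * (sqrt (d p) * b p))" .
      have Sb0: "0 \<le> sqrt \<beta> * Sb" unfolding Sb_def xa_def ya_def
        using b0 by (intro mult_nonneg_nonneg sum_nonneg) auto
      have "(sqrt \<beta> * Sb)^2 \<le> (\<Sum>p\<in>UNIV. (sqrt (c p) * a p) * (sqrt (d p) * b p))^2"
        using s1 Sb0 by (intro power_mono) auto
      also have "\<dots> \<le> (\<Sum>p\<in>UNIV. (sqrt (c p) * a p)^2) * (\<Sum>p\<in>UNIV. (sqrt (d p) * b p)^2)"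
        by (rule Cauchy_Schwarz_ineq_sum)
      also have "\<dots> = (\<Sum>p\<in>UNIV. c p * (a p)^2) * (\<Sum>p\<in>UNIV. d p * (b p)^2)"
        using c0 d0 by (simp add: power_mult_distrib)
      finally show ?thesis using b0 by (simp add: power_mult_distrib)
    qed
    have xa0: "\<And>p. 0 \<le> xa p" and ya0: "\<And>p. 0 \<le> ya p" by (simp_all add: xa_def ya_def)
    have B1: "\<beta> * Sb^2 \<le> IX * JY" unfolding IXe JYe
      by (rule key[of xa ya u v]) (simp_all add: pwp u0 v0 xa0 ya0)
    have B2: "\<beta> * Sb^2 \<le> JX * IY" unfolding JXe IYe
      by (rule key[of xa ya v u]) (simp_all add: pwp u0 v0 xa0 ya0 mult.commute)
    have TS2: "\<beta> * (cmod T)^2 \<le> \<beta> * Sb^2"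
      using TS b0 by (intro mult_left_mono power_mono) auto
    have q0: "0 \<le> \<beta> * (cmod T)^2" using b0 by simp
    have "(\<beta> * (cmod T)^2)^2 \<le> (IX * JY) * (JX * IY)"
    proof -
      have "(\<beta> * (cmod T)^2)^2 = (\<beta> * (cmod T)^2) * (\<beta> * (cmod T)^2)" by (simp add: power2_eq_square)
      also have "\<dots> \<le> (IX * JY) * (JX * IY)"
        by (rule mult_mono) (use TS2 B1 B2 q0 in linarith)+
      finally show ?thesis .
    qed
    hence "sqrt ((\<beta> * (cmod T)^2)^2) \<le> sqrt ((IX * JY) * (JX * IY))" by (rule real_sqrt_le_mono)
    hence "\<beta> * (cmod T)^2 \<le> sqrt ((IX * JY) * (JX * IY))" using q0 by simp
    also have "(IX * JY) * (JX * IY) = (IX * JX) * (IY * JY)" by (simp add: mult_ac)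
    finally show ?thesis by (simp add: real_sqrt_mult)
  qed
qed

type_synonym 'n cm = "complex^'n^'n"

lemma mm_entry: "(X ** Y) $ i $ j = (\<Sum>k\<in>UNIV. X $ i $ k * Y $ k $ j)"
  by (simp add: matrix_matrix_mult_def)

lemma mat_entry: "mat c $ i $ j = (if i = j then c else 0)"
  by (simp add: mat_def)

lemma diag_entry: "cmat_diag a $ i $ j = (if i = j then a i else 0)"
  by (simp add: cmat_diag_def)

lemma adj_entry: "cmat_adjoint X $ i $ j = cnj (X $ j $ i)"
  by (simp add: cmat_adjoint_def)

lemma diag_left: "(cmat_diag a ** (X::complex^'n^'n)) $ i $ j = a i * X $ i $ j"
proof -
  have "(cmat_diag a ** X) $ i $ j = (\<Sum>k\<in>UNIV. if k = i then a k * X $ k $ j else 0)"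
    unfolding mm_entry diag_entry by (rule sum.cong) auto
  thus ?thesis by simp
qed

lemma diag_right: "((X::complex^'n^'n) ** cmat_diag a) $ i $ j = X $ i $ j * a j"
  by (simp add: mm_entry diag_entry if_distrib if_distribR cong: if_cong)

lemma mat_left: "(mat c ** (X::complex^'n^'n)) $ i $ j = c * X $ i $ j"
proof -
  have "(mat c ** X) $ i $ j = (\<Sum>k\<in>UNIV. if k = i then c * X $ k $ j else 0)"
    unfolding mm_entry mat_entry by (rule sum.cong) auto
  thus ?thesis by simp
qed

lemma mat_right: "((X::complex^'n^'n) ** mat c) $ i $ j = X $ i $ j * c"
  by (simp add: mm_entry mat_entry if_distrib if_distribR cong: if_cong)

lemma mat_comm: "mat c ** (X::complex^'n^'n) = X ** mat c"
  by (simp add: vec_eq_iff mat_left mat_right mult.commute)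

lemma mm_sub_left: "((X::complex^'n^'n) - Y) ** Z = X ** Z - Y ** Z"
  by (simp add: vec_eq_iff mm_entry left_diff_distrib sum_subtractf)
lemma mm_sub_right: "(X::complex^'n^'n) ** (Y - Z) = X ** Y - X ** Z"
  by (simp add: vec_eq_iff mm_entry right_diff_distrib sum_subtractf)
lemma mm_add_left: "((X::complex^'n^'n) + Y) ** Z = X ** Z + Y ** Z"
  by (simp add: vec_eq_iff mm_entry distrib_right sum.distrib)
lemma mm_add_right: "(X::complex^'n^'n) ** (Y + Z) = X ** Y + X ** Z"
  by (simp add: vec_eq_iff mm_entry distrib_left sum.distrib)

lemma adj_mult: "cmat_adjoint ((X::complex^'n^'n) ** Y) = cmat_adjoint Y ** cmat_adjoint X"
  by (simp add: vec_eq_iff mm_entry adj_entry mult.commute)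

lemma adj_adj: "cmat_adjoint (cmat_adjoint (X::complex^'n^'n)) = X"
  by (simp add: vec_eq_iff adj_entry)

lemma adj_sub: "cmat_adjoint ((X::complex^'n^'n) - Y) = cmat_adjoint X - cmat_adjoint Y"
  by (simp add: vec_eq_iff adj_entry)

lemma adj_mat: "cmat_adjoint (mat c :: complex^'n^'n) = mat (cnj c)"
  by (simp add: vec_eq_iff adj_entry mat_entry)

lemma trace_adj: "cmat_trace (cmat_adjoint (X::complex^'n^'n)) = cnj (cmat_trace X)"
  by (simp add: cmat_trace_def adj_entry)

lemma cmat_trace_eq: "cmat_trace X = trace X"
  by (simp add: cmat_trace_def trace_def)

lemma trace_comm: "cmat_trace ((X::complex^'n^'n) ** Y) = cmat_trace (Y ** X)"
  unfolding cmat_trace_eq by (rule trace_mul_sym)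

lemma trace_mm: "cmat_trace ((X::complex^'n^'n) ** Y) = (\<Sum>i\<in>UNIV. \<Sum>j\<in>UNIV. X $ i $ j * Y $ j $ i)"
  by (simp add: cmat_trace_def mm_entry)

locale unit_ctx =
  fixes U :: "complex^'n^'n"
  assumes uni: "cmat_unitary U"
begin

lemma UU: "cmat_adjoint U ** U = mat 1" and UU': "U ** cmat_adjoint U = mat 1"
  using uni by (auto simp: cmat_unitary_def)

definition cj :: "complex^'n^'n \<Rightarrow> complex^'n^'n" where
  "cj X = U ** X ** cmat_adjoint U"

lemma cj_mult: "cj X ** cj Y = cj (X ** Y)"
proof -
  have "cj X ** cj Y = U ** X ** (cmat_adjoint U ** U) ** Y ** cmat_adjoint U"
    unfolding cj_def by (simp add: matrix_mul_assoc)
  also have "\<dots> = cj (X ** Y)" unfolding UU cj_def by (simp add: matrix_mul_assoc)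
  finally show ?thesis .
qed

lemma cj_sub: "cj (X - Y) = cj X - cj Y"
  unfolding cj_def by (simp add: mm_sub_left mm_sub_right)
lemma cj_add: "cj (X + Y) = cj X + cj Y"
  unfolding cj_def by (simp add: mm_add_left mm_add_right)

lemma cj_mat: "cj (mat c) = mat c"
proof -
  have "cj (mat c) = mat c ** (U ** cmat_adjoint U)"
    unfolding cj_def by (simp add: mat_comm matrix_mul_assoc)
  thus ?thesis by (simp add: UU')
qed

lemma trace_cj: "cmat_trace (cj X) = cmat_trace X"
proof -
  have "cmat_trace (cj X) = cmat_trace (U ** (X ** cmat_adjoint U))"
    unfolding cj_def by (simp add: matrix_mul_assoc)
  also have "\<dots> = cmat_trace ((X ** cmat_adjoint U) ** U)" by (rule trace_comm)
  also have "\<dots> = cmat_trace (X ** (cmat_adjoint U ** U))" by (simp only: matrix_mul_assoc)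
  also have "\<dots> = cmat_trace X" by (simp add: UU)
  finally show ?thesis .
qed

lemma cj_inv: "cj (cmat_adjoint U ** Y ** U) = Y"
proof -
  have "cj (cmat_adjoint U ** Y ** U) = (U ** cmat_adjoint U) ** Y ** (U ** cmat_adjoint U)"
    unfolding cj_def by (simp add: matrix_mul_assoc)
  thus ?thesis by (simp add: UU')
qed

lemma cj_comm: "commutator (cj X) (cj Y) = cj (commutator X Y)"
  unfolding commutator_def by (simp add: cj_mult cj_sub)

lemma cj_acomm: "anticommutator (cj X) (cj Y) = cj (anticommutator X Y)"
  unfolding anticommutator_def by (simp add: cj_mult cj_add)

end

lemma uni_cancel:
  assumes "cmat_unitary U"
  shows "X ** cmat_adjoint U ** U = X" "X ** U ** cmat_adjoint U = X"
    "cmat_adjoint U ** U = mat 1" "U ** cmat_adjoint U = mat 1"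
proof -
  have a: "cmat_adjoint U ** U = mat 1" "U ** cmat_adjoint U = mat 1"
    using assms by (auto simp: cmat_unitary_def)
  show "X ** cmat_adjoint U ** U = X" by (simp add: matrix_mul_assoc[symmetric] a)
  show "X ** U ** cmat_adjoint U = X" by (simp add: matrix_mul_assoc[symmetric] a)
  show "cmat_adjoint U ** U = mat 1" "U ** cmat_adjoint U = mat 1" by (rule a)+
qed

lemma funcalc_unique:
  fixes U V :: "complex^'n^'n"
  assumes U: "cmat_unitary U" and V: "cmat_unitary V"
    and eq: "U ** cmat_diag d ** cmat_adjoint U = V ** cmat_diag e ** cmat_adjoint V"
  shows "U ** cmat_diag (\<lambda>i. complex_of_real (f (Re (d i)))) ** cmat_adjoint U
       = V ** cmat_diag (\<lambda>i. complex_of_real (f (Re (e i)))) ** cmat_adjoint V"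
proof -
  define W where "W = cmat_adjoint V ** U"
  have WD: "W ** cmat_diag d = cmat_diag e ** W"
  proof -
    have "cmat_adjoint V ** (U ** cmat_diag d ** cmat_adjoint U) ** U
        = cmat_adjoint V ** (V ** cmat_diag e ** cmat_adjoint V) ** U" using eq by simp
    hence "cmat_adjoint V ** U ** cmat_diag d ** cmat_adjoint U ** U
        = cmat_adjoint V ** V ** cmat_diag e ** cmat_adjoint V ** U" by (simp add: matrix_mul_assoc)
    hence "cmat_adjoint V ** U ** cmat_diag d = mat 1 ** cmat_diag e ** cmat_adjoint V ** U"
      by (simp add: uni_cancel[OF U] uni_cancel[OF V])
    thus ?thesis unfolding W_def by (simp add: matrix_mul_assoc)
  qed
  define fd where "fd = cmat_diag (\<lambda>i. complex_of_real (f (Re (d i))))"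
  define fe where "fe = cmat_diag (\<lambda>i. complex_of_real (f (Re (e i))))"
  have Wf: "W ** fd = fe ** W"
  proof -
    { fix i j
      have ent: "W $ i $ j * d j = e i * W $ i $ j"
        using arg_cong[OF WD, of "\<lambda>M. M $ i $ j"] by (simp add: diag_left diag_right)
      have "W $ i $ j * complex_of_real (f (Re (d j))) = complex_of_real (f (Re (e i))) * W $ i $ j"
      proof (cases "W $ i $ j = 0")
        case True thus ?thesis by simp
      next
        case False
        hence "d j = e i" using ent by (simp add: mult.commute)
        thus ?thesis by (simp add: mult.commute)
      qed }
    thus ?thesis unfolding fd_def fe_def by (simp add: vec_eq_iff diag_left diag_right)
  qed
  have "U ** fd ** cmat_adjoint U = V ** cmat_adjoint V ** U ** fd ** cmat_adjoint U"
    by (simp add: uni_cancel[OF V])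
  also have "\<dots> = V ** (W ** fd) ** cmat_adjoint U" unfolding W_def by (simp add: matrix_mul_assoc)
  also have "\<dots> = V ** fe ** (W ** cmat_adjoint U)" unfolding Wf by (simp add: matrix_mul_assoc)
  also have "W ** cmat_adjoint U = cmat_adjoint V" unfolding W_def by (simp add: uni_cancel[OF U])
  finally show ?thesis unfolding fd_def fe_def .
qed

lemma mat_fun_eq:
  fixes U :: "complex^'n^'n"
  assumes U: "cmat_unitary U" and d: "\<forall>i. d i \<in> \<real>" and A: "A = U ** cmat_diag d ** cmat_adjoint U"
  shows "mat_fun f A = U ** cmat_diag (\<lambda>i. complex_of_real (f (Re (d i)))) ** cmat_adjoint U"
proof -
  let ?P = "\<lambda>B. \<exists>U d. cmat_unitary U \<and> (\<forall>i. d i \<in> \<real>) \<and>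
      A = U ** cmat_diag d ** cmat_adjoint U \<and>
      B = U ** cmat_diag (\<lambda>i. complex_of_real (f (Re (d i)))) ** cmat_adjoint U"
  have ex: "?P (U ** cmat_diag (\<lambda>i. complex_of_real (f (Re (d i)))) ** cmat_adjoint U)"
    using U d A by blast
  have "?P (mat_fun f A)" unfolding mat_fun_def by (rule someI[of ?P, OF ex])
  then obtain V e where V: "cmat_unitary V" "A = V ** cmat_diag e ** cmat_adjoint V"
    and B: "mat_fun f A = V ** cmat_diag (\<lambda>i. complex_of_real (f (Re (e i)))) ** cmat_adjoint V" by blast
  show ?thesis unfolding B by (rule funcalc_unique[OF V(1) U]) (use V(2) A in simp)
qed

abbreviation rdiag :: "('n \<Rightarrow> real) \<Rightarrow> complex^'n^'n" where
  "rdiag a \<equiv> cmat_diag (\<lambda>i. complex_of_real (a i))"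

lemma comm_entry: "commutator (rdiag a) X $ i $ j = complex_of_real (a i - a j) * X $ i $ j"
  unfolding commutator_def by (simp add: diag_left diag_right algebra_simps)

lemma acomm_entry: "anticommutator (rdiag a) X $ i $ j = complex_of_real (a i + a j) * X $ i $ j"
  unfolding anticommutator_def by (simp add: diag_left diag_right algebra_simps)

lemma trace_diag_right: "cmat_trace (M ** rdiag c) = (\<Sum>i\<in>UNIV. M $ i $ i * complex_of_real (c i))"
  by (simp add: cmat_trace_def diag_right)

lemma herm_sq: "X $ j $ i = cnj (X $ i $ j) \<Longrightarrow> X $ i $ j * X $ j $ i = complex_of_real ((cmod (X $ i $ j))^2)"
  by (metis complex_norm_square of_real_power)

lemma trace_I_diag:
  assumes hX: "\<And>i j. X $ j $ i = cnj (X $ i $ j)"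
  shows "Re (cmat_trace ((mat \<i> ** commutator (rdiag a) X) ** (mat \<i> ** commutator (rdiag b) X) ** rdiag c))
       = (\<Sum>i\<in>UNIV. \<Sum>j\<in>UNIV. (a i - a j) * (b i - b j) * c i * (cmod (X $ i $ j))^2)"
proof -
  have "cmat_trace ((mat \<i> ** commutator (rdiag a) X) ** (mat \<i> ** commutator (rdiag b) X) ** rdiag c)
      = (\<Sum>i\<in>UNIV. \<Sum>j\<in>UNIV. complex_of_real ((a i - a j) * (b i - b j) * c i * (cmod (X $ i $ j))^2))"
    unfolding trace_diag_right
  proof (intro sum.cong refl)
    fix i
    have "((mat \<i> ** commutator (rdiag a) X) ** (mat \<i> ** commutator (rdiag b) X)) $ i $ i
        = (\<Sum>j\<in>UNIV. complex_of_real ((a i - a j) * (b i - b j)) * (X $ i $ j * X $ j $ i))"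
      unfolding mm_entry[of _ _ i i] by (intro sum.cong refl) (simp add: mat_left comm_entry algebra_simps)
    also have "\<dots> = (\<Sum>j\<in>UNIV. complex_of_real ((a i - a j) * (b i - b j) * (cmod (X $ i $ j))^2))"
      by (intro sum.cong refl) (simp add: herm_sq[OF hX])
    finally show "((mat \<i> ** commutator (rdiag a) X) ** (mat \<i> ** commutator (rdiag b) X)) $ i $ i * complex_of_real (c i)
        = (\<Sum>j\<in>UNIV. complex_of_real ((a i - a j) * (b i - b j) * c i * (cmod (X $ i $ j))^2))"
      by (simp add: sum_distrib_right sum_distrib_left mult_ac)
  qed
  thus ?thesis by (simp add: Re_sum)
qed

lemma trace_J_diag:
  assumes hX: "\<And>i j. X $ j $ i = cnj (X $ i $ j)"
  shows "Re (cmat_trace (anticommutator (rdiag a) X ** anticommutator (rdiag b) X ** rdiag c))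
       = (\<Sum>i\<in>UNIV. \<Sum>j\<in>UNIV. (a i + a j) * (b i + b j) * c i * (cmod (X $ i $ j))^2)"
proof -
  have "cmat_trace (anticommutator (rdiag a) X ** anticommutator (rdiag b) X ** rdiag c)
      = (\<Sum>i\<in>UNIV. \<Sum>j\<in>UNIV. complex_of_real ((a i + a j) * (b i + b j) * c i * (cmod (X $ i $ j))^2))"
    unfolding trace_diag_right
  proof (intro sum.cong refl)
    fix i
    have "(anticommutator (rdiag a) X ** anticommutator (rdiag b) X) $ i $ i
        = (\<Sum>j\<in>UNIV. complex_of_real ((a i + a j) * (b i + b j)) * (X $ i $ j * X $ j $ i))"
      unfolding mm_entry[of _ _ i i] by (intro sum.cong refl) (simp add: acomm_entry algebra_simps)
    also have "\<dots> = (\<Sum>j\<in>UNIV. complex_of_real ((a i + a j) * (b i + b j) * (cmod (X $ i $ j))^2))"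
      by (intro sum.cong refl) (simp add: herm_sq[OF hX])
    finally show "(anticommutator (rdiag a) X ** anticommutator (rdiag b) X) $ i $ i * complex_of_real (c i)
        = (\<Sum>j\<in>UNIV. complex_of_real ((a i + a j) * (b i + b j) * c i * (cmod (X $ i $ j))^2))"
      by (simp add: sum_distrib_right sum_distrib_left mult_ac)
  qed
  thus ?thesis by (simp add: Re_sum)
qed

lemma trace_T_diag:
  "cmat_trace (rdiag a ** rdiag b ** rdiag c ** commutator X Y)
     = (\<Sum>i\<in>UNIV. \<Sum>j\<in>UNIV. complex_of_real (a i * b i * c i - a j * b j * c j) * X $ i $ j * Y $ j $ i)"
proof -
  define k where "k i = complex_of_real (a i * b i * c i)" for i
  have dd: "rdiag a ** rdiag b ** rdiag c = cmat_diag k"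
    by (simp add: vec_eq_iff diag_left diag_right diag_entry k_def)
  have "cmat_trace (cmat_diag k ** commutator X Y) = (\<Sum>i\<in>UNIV. k i * (commutator X Y) $ i $ i)"
    by (simp add: cmat_trace_def diag_left)
  also have "\<dots> = (\<Sum>i\<in>UNIV. \<Sum>j\<in>UNIV. k i * X $ i $ j * Y $ j $ i) - (\<Sum>i\<in>UNIV. \<Sum>j\<in>UNIV. k i * Y $ i $ j * X $ j $ i)"
    unfolding commutator_def by (simp add: mm_entry sum_distrib_left right_diff_distrib sum_subtractf mult_ac)
  also have "(\<Sum>i\<in>UNIV. \<Sum>j\<in>UNIV. k i * Y $ i $ j * X $ j $ i) = (\<Sum>i\<in>UNIV. \<Sum>j\<in>UNIV. k j * X $ i $ j * Y $ j $ i)"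
    by (subst sum.swap) (simp add: mult_ac)
  also have "(\<Sum>i\<in>UNIV. \<Sum>j\<in>UNIV. k i * X $ i $ j * Y $ j $ i) - (\<Sum>i\<in>UNIV. \<Sum>j\<in>UNIV. k j * X $ i $ j * Y $ j $ i)
      = (\<Sum>i\<in>UNIV. \<Sum>j\<in>UNIV. (k i - k j) * X $ i $ j * Y $ j $ i)"
    by (simp add: sum_subtractf[symmetric] left_diff_distrib)
  finally show ?thesis unfolding dd k_def by (simp add: of_real_diff)
qed

lemma comm_center: "commutator ((A::complex^'n^'n) - mat a) (B - mat b) = commutator A B"
proof -
  have e1: "mat a ** B = B ** mat a" "mat b ** A = A ** mat b" "mat a ** (mat b :: complex^'n^'n) = mat b ** mat a"
    by (rule mat_comm)+
  show ?thesis unfolding commutator_def by (simp add: mm_sub_left mm_sub_right e1 algebra_simps)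
qed

lemma trace_real_herm:
  assumes "cmat_hermitian (R::complex^'n^'n)" "cmat_hermitian A"
  shows "cnj (cmat_trace (R ** A)) = cmat_trace (R ** A)"
proof -
  have "cnj (cmat_trace (R ** A)) = cmat_trace (cmat_adjoint (R ** A))" by (simp add: trace_adj)
  also have "\<dots> = cmat_trace (A ** R)" using assms by (simp add: adj_mult cmat_hermitian_def)
  also have "\<dots> = cmat_trace (R ** A)" by (rule trace_comm)
  finally show ?thesis .
qed

lemma centered_herm:
  assumes "cmat_hermitian (R::complex^'n^'n)" "cmat_hermitian A"
  shows "cmat_hermitian (centered R A)"
  using trace_real_herm[OF assms] assms(2)
  unfolding centered_def cmat_hermitian_def by (simp add: adj_sub adj_mat)

lemma conj_herm:
  assumes "cmat_hermitian (H::complex^'n^'n)"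
  shows "cmat_hermitian (cmat_adjoint U ** H ** U)"
  using assms unfolding cmat_hermitian_def by (simp add: adj_mult adj_adj matrix_mul_assoc)

lemma eig_pos:
  fixes \<rho> U :: "complex^'n^'n"
  assumes rho: "density_pos \<rho>" and U: "cmat_unitary U" and dec: "\<rho> = U ** cmat_diag d ** cmat_adjoint U"
  shows "0 < Re (d i)" "Re (d i) \<le> 1"
proof -
  have RU: "\<rho> ** U = U ** cmat_diag d" unfolding dec by (simp add: uni_cancel[OF U])
  have pos: "\<And>j. 0 < Re (d j)"
  proof -
    fix j
    define v :: "complex^'n" where "v = (\<chi> k. U $ k $ j)"
    have rv: "\<rho> *v v = (\<chi> k. U $ k $ j * d j)"
    proof -
      have "(\<rho> *v v) $ k = (\<rho> ** U) $ k $ j" for k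
        by (simp add: v_def matrix_vector_mult_def mm_entry)
      thus ?thesis unfolding RU by (simp add: vec_eq_iff diag_right)
    qed
    have one: "(\<Sum>k\<in>UNIV. cnj (U $ k $ j) * U $ k $ j) = 1"
    proof -
      have "(cmat_adjoint U ** U) $ j $ j = 1" by (simp add: uni_cancel[OF U] mat_entry)
      thus ?thesis by (simp add: mm_entry adj_entry)
    qed
    have vnz: "v \<noteq> 0"
    proof
      assume "v = 0"
      hence "\<And>k. U $ k $ j = 0" by (simp add: v_def vec_eq_iff)
      thus False using one by simp
    qed
    have "0 < Re (\<Sum>k\<in>UNIV. cnj (v $ k) * (\<rho> *v v) $ k)"
      using rho vnz unfolding density_pos_def cmat_posdef_def by blast
    also have "(\<Sum>k\<in>UNIV. cnj (v $ k) * (\<rho> *v v) $ k) = d j * (\<Sum>k\<in>UNIV. cnj (U $ k $ j) * U $ k $ j)"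
      unfolding rv by (simp add: v_def sum_distrib_left mult_ac)
    finally show "0 < Re (d j)" using one by simp
  qed
  show "0 < Re (d i)" by (rule pos)
  interpret u: unit_ctx U by unfold_locales (rule U)
  have "cmat_trace \<rho> = cmat_trace (cmat_diag d)" unfolding dec using u.trace_cj by (simp add: u.cj_def)
  hence "(\<Sum>j\<in>UNIV. d j) = 1" using rho by (simp add: density_pos_def cmat_trace_def diag_entry)
  hence s: "(\<Sum>j\<in>UNIV. Re (d j)) = 1" by (metis Re_sum one_complex.simps(1))
  have "Re (d i) \<le> (\<Sum>j\<in>UNIV. Re (d j))" by (rule member_le_sum) (auto intro: less_imp_le pos)
  thus "Re (d i) \<le> 1" using s by simp
qed

theorem theorem3p1:
  fixes f g h :: "real \<Rightarrow> real"
    and \<rho> A B :: "complex^'n^'n"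
  assumes f_cont: "continuous_on {0..1} f" and g_cont: "continuous_on {0..1} g"
      and h_cont: "continuous_on {0..1} h"
    and f_nonneg: "\<forall>x\<in>{0..1}. 0 \<le> f x" and g_nonneg: "\<forall>x\<in>{0..1}. 0 \<le> g x"
      and h_nonneg: "\<forall>x\<in>{0..1}. 0 \<le> h x"
    and f_diff: "\<forall>x\<in>{0<..<1}. f differentiable (at x)"
      and g_diff: "\<forall>x\<in>{0<..<1}. g differentiable (at x)"
      and h_diff: "\<forall>x\<in>{0<..<1}. h differentiable (at x)"
    and f_pos: "\<forall>x\<in>{0<..1}. 0 < f x" and g_pos: "\<forall>x\<in>{0<..1}. 0 < g x"
      and h_pos: "\<forall>x\<in>{0<..1}. 0 < h x"
    and F_deriv_nz: "\<forall>x\<in>{0<..<1}. deriv (\<lambda>t. ln (f t)) x \<noteq> 0"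
    and F_inj: "inj_on (\<lambda>t. ln (f t)) {0<..1}"
    and cases:
      "(cli_monotone_pair f g \<and> cli_monotone_pair f h \<and>
          (\<forall>x\<in>{0<..1}. \<forall>y\<in>{0<..1}. x < y \<longrightarrow>
             1 + (ln (g y) - ln (g x)) / (ln (f y) - ln (f x))
               \<le> (ln (h y) - ln (h x)) / (ln (f y) - ln (f x))))
       \<or> (cli_monotone_pair f g \<and> cli_antimonotone_pair f h \<and>
          (\<forall>x\<in>{0<..1}. \<forall>y\<in>{0<..1}. x < y \<longrightarrow>
             1 + (ln (g y) - ln (g x)) / (ln (f y) - ln (f x))
               + (ln (h y) - ln (h x)) / (ln (f y) - ln (f x)) \<ge> 0))"
    and rho: "density_pos \<rho>"
    and A_sa: "cmat_hermitian A" and B_sa: "cmat_hermitian B"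
  shows "U_corr \<rho> f g h A * U_corr \<rho> f g h B
           \<ge> beta_const f g h *
             (cmod (cmat_trace (mat_fun f \<rho> ** mat_fun g \<rho> ** mat_fun h \<rho> ** commutator A B)))^2"
proof -
  have herm: "cmat_hermitian \<rho>" using rho unfolding density_pos_def cmat_posdef_def by blast
  obtain U d where U: "cmat_unitary U" and dR: "\<forall>i. d i \<in> \<real>"
    and dec: "\<rho> = U ** cmat_diag d ** cmat_adjoint U"
    using spectral[OF herm] by blast
  define lam where "lam i = Re (d i)" for i
  have lam01: "lam i \<in> {0<..1}" for i
    using eig_pos[OF rho U dec, of i] by (simp add: lam_def)
  define fr where "fr i = f (lam i)" for i
  define gr where "gr i = g (lam i)" for i
  define hr where "hr i = h (lam i)" for i
  interpret u: unit_ctx U by unfold_locales (rule U)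
  have cj_mat_left: "mat c ** u.cj Z = u.cj (mat c ** Z)" for c Z
    using u.cj_mult[of "mat c" Z] by (simp add: u.cj_mat)
  have mfF: "mat_fun f \<rho> = u.cj (rdiag fr)"
    unfolding mat_fun_eq[OF U dR dec] u.cj_def fr_def lam_def ..
  have mfG: "mat_fun g \<rho> = u.cj (rdiag gr)"
    unfolding mat_fun_eq[OF U dR dec] u.cj_def gr_def lam_def ..
  have mfH: "mat_fun h \<rho> = u.cj (rdiag hr)"
    unfolding mat_fun_eq[OF U dR dec] u.cj_def hr_def lam_def ..
  define X where "X = cmat_adjoint U ** centered \<rho> A ** U"
  define Y where "Y = cmat_adjoint U ** centered \<rho> B ** U"
  have cA: "centered \<rho> A = u.cj X" unfolding X_def u.cj_inv ..
  have cB: "centered \<rho> B = u.cj Y" unfolding Y_def u.cj_inv ..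
  have hX: "cmat_hermitian X" unfolding X_def by (intro conj_herm centered_herm herm A_sa)
  have hY: "cmat_hermitian Y" unfolding Y_def by (intro conj_herm centered_herm herm B_sa)
  have hXe: "\<And>i j. X $ j $ i = cnj (X $ i $ j)" using herm_entry[OF hX] by blast
  have hYe: "\<And>i j. Y $ j $ i = cnj (Y $ i $ j)" using herm_entry[OF hY] by blast
  have IA: "I_corr \<rho> f g h A = (\<Sum>i\<in>UNIV. \<Sum>j\<in>UNIV. (fr i - fr j) * (gr i - gr j) * hr i * (cmod (X $ i $ j))^2) / 2"
    unfolding I_corr_def Let_def cA mfF mfG mfH
    by (simp only: u.cj_comm cj_mat_left u.cj_mult u.trace_cj trace_I_diag[OF hXe])
  have IB: "I_corr \<rho> f g h B = (\<Sum>i\<in>UNIV. \<Sum>j\<in>UNIV. (fr i - fr j) * (gr i - gr j) * hr i * (cmod (Y $ i $ j))^2) / 2"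
    unfolding I_corr_def Let_def cB mfF mfG mfH
    by (simp only: u.cj_comm cj_mat_left u.cj_mult u.trace_cj trace_I_diag[OF hYe])
  have JA: "J_corr \<rho> f g h A = (\<Sum>i\<in>UNIV. \<Sum>j\<in>UNIV. (fr i + fr j) * (gr i + gr j) * hr i * (cmod (X $ i $ j))^2) / 2"
    unfolding J_corr_def Let_def cA mfF mfG mfH
    by (simp only: u.cj_acomm u.cj_mult u.trace_cj trace_J_diag[OF hXe])
  have JB: "J_corr \<rho> f g h B = (\<Sum>i\<in>UNIV. \<Sum>j\<in>UNIV. (fr i + fr j) * (gr i + gr j) * hr i * (cmod (Y $ i $ j))^2) / 2"
    unfolding J_corr_def Let_def cB mfF mfG mfH
    by (simp only: u.cj_acomm u.cj_mult u.trace_cj trace_J_diag[OF hYe])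
  have cAB: "commutator A B = u.cj (commutator X Y)"
  proof -
    have "commutator A B = commutator (centered \<rho> A) (centered \<rho> B)"
      unfolding centered_def by (rule comm_center[symmetric])
    thus ?thesis unfolding cA cB u.cj_comm .
  qed
  have TT: "cmat_trace (mat_fun f \<rho> ** mat_fun g \<rho> ** mat_fun h \<rho> ** commutator A B)
      = (\<Sum>i\<in>UNIV. \<Sum>j\<in>UNIV. complex_of_real (fr i * gr i * hr i - fr j * gr j * hr j) * X $ i $ j * Y $ j $ i)"
    unfolding mfF mfG mfH cAB
    by (simp only: u.cj_mult u.trace_cj trace_T_diag)
  have mg: "cli_monotone_pair f g" using cases by blast
  have lam01': "lam i \<in> {0..1}" for i using lam01[of i] by auto
  have mono: "\<And>i j. 0 \<le> (fr i - fr j) * (gr i - gr j)"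
    using mg lam01' unfolding cli_monotone_pair_def fr_def gr_def by blast
  have nnf: "\<And>i. 0 \<le> fr i" using f_nonneg lam01' unfolding fr_def by blast
  have nng: "\<And>i. 0 \<le> gr i" using g_nonneg lam01' unfolding gr_def by blast
  have nnh: "\<And>i. 0 \<le> hr i" using h_nonneg lam01' unfolding hr_def by blast
  have pw: "\<And>i j. 16 * beta_const f g h * (fr i * gr i * hr i - fr j * gr j * hr j)^2
        \<le> (fr i - fr j) * (gr i - gr j) * (fr i + fr j) * (gr i + gr j) * (hr i + hr j)^2"
    unfolding fr_def gr_def hr_def
    by (rule pair_ineq[OF f_cont g_cont h_cont f_diff g_diff h_diff f_pos g_pos h_pos F_deriv_nz F_inj cases lam01 lam01])
  have main: "beta_const f g h * (cmod (\<Sum>i\<in>UNIV. \<Sum>j\<in>UNIV. complex_of_real (fr i * gr i * hr i - fr j * gr j * hr j) * X $ i $ j * Y $ j $ i))^2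
     \<le> sqrt ((\<Sum>i\<in>UNIV. \<Sum>j\<in>UNIV. (fr i - fr j) * (gr i - gr j) * hr i * (cmod (X $ i $ j))^2) / 2 *
              ((\<Sum>i\<in>UNIV. \<Sum>j\<in>UNIV. (fr i + fr j) * (gr i + gr j) * hr i * (cmod (X $ i $ j))^2) / 2)) *
       sqrt ((\<Sum>i\<in>UNIV. \<Sum>j\<in>UNIV. (fr i - fr j) * (gr i - gr j) * hr i * (cmod (Y $ i $ j))^2) / 2 *
              ((\<Sum>i\<in>UNIV. \<Sum>j\<in>UNIV. (fr i + fr j) * (gr i + gr j) * hr i * (cmod (Y $ i $ j))^2) / 2))"
    by (rule final_sum_ineq[of "\<lambda>i j. X $ i $ j" "\<lambda>i j. Y $ i $ j" fr gr hr, OF hXe hYe mono nnf nng nnh pw])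
  show ?thesis
    unfolding U_corr_def IA IB JA JB TT using main by simp
qed

end
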